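(* For $s>0$, define $\boldsymbol \mu(s)$ as the unique minimizer of the regularized and constrained minimization problem \[ \min_{\boldsymbol \theta \in \mathbb{R}^d,\ \boldsymbol \theta \geq \mathbf{0}} \left\{ f(\boldsymbol \theta) + \frac{1}{s} \langle \boldsymbol k, \boldsymbol \theta \rangle \right\} \] and let $I(s) = \{ i \in \{1, \dots, d\} \mid \mu_i(s) > 0 \}$. Then: (1) The minimizer $\boldsymbol \mu(s)$ is nondecreasing in $s$, i.e., for all $i \in \{1,\dots,d\}$, $\mu_i(s)$ is nondecreasing in $s$. Consequently, $I(s)$ is nondecreasing in $s$ for the inclusion. (2) Denote $s_1, \dots, s_q$ the points of discontinuity of the function $s \mapsto I(s)$. For all $s > 0$, $s \neq s_1, \dots, s_q$, \[ \boldsymbol \theta^{(\varepsilon)}\left(s \log \tfrac{1}{\varepsilon}\right) \xrightarrow[\varepsilon \to 0]{} \boldsymbol \theta_*^{(I(s))} . \] Moreover, the convergence is uniform for $s$ in compact subsets of $\mathbb{R}_{>0} \setminus \{s_1, \dots, s_q\}$. (3) For all $s>0$, \[ \frac{1}{s \log \frac{1}{\varepsilon}} \int_{0}^{s \log \frac{1}{\varepsilon}} \boldsymbol \theta^{(\varepsilon)}(t)\, \mathrm{d} t \xrightarrow[\varepsilon \to 0]{} \boldsymbol \mu(s) . \] Moreover, the convergence is uniform for $s$ in compact subsets of $\mathbb{R}_{>0}$.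
   Context: Let $\boldsymbol X \in \mathbb{R}^{n\times d}$ (rows $\boldsymbol x_1,\dots,\boldsymbol x_n$, columns/features $\boldsymbol X_1,\dots,\boldsymbol X_d$), $\boldsymbol y \in \mathbb{R}^n$, $\boldsymbol M = \boldsymbol X^\top \boldsymbol X$, $\boldsymbol r = \boldsymbol X^\top \boldsymbol y$, and $f(\boldsymbol \theta) = \frac{1}{2}\Vert \boldsymbol y\Vert^2 - \langle \boldsymbol r, \boldsymbol \theta\rangle + \frac12 \langle \boldsymbol \theta, \boldsymbol M \boldsymbol \theta\rangle$. Assume (A1) $\boldsymbol r > \mathbf{0}$ (all coordinates positive) and (A2) $M_{ij} = \langle \boldsymbol X_i, \boldsymbol X_j\rangle \leq 0$ for all $i \neq j$. The diagonal linear network dynamics (gradient flow in $u_i$ with $\theta_i = u_i^2/4$) is \[ \frac{\mathrm{d} \theta_i}{\mathrm{d} t} = \theta_i \Big( r_i - \sum_{j=1}^{d} M_{ij} \theta_j \Big), \quad i=1,\dots,d. \] For $\varepsilon>0$, $\boldsymbol \theta^{(\varepsilon)}(t)$ denotes the solution of this ODE started from $\boldsymbol \theta^{(\varepsilon)}(0) = (C_1 \varepsilon^{k_1}, \dots, C_d \varepsilon^{k_d})$ with constants $\boldsymbol C = (C_1,\dots,C_d) > \mathbf{0}$ and $\boldsymbol k = (k_1,\dots,k_d) > \mathbf{0}$. For $I \subset \{1,\dots,d\}$, $\boldsymbol \theta_*^{(I)}$ denotes the unique fixed point $\boldsymbol \theta \geq \mathbf{0}$ of this ODE with support $\{i : \theta_i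 > 0\}$ equal to $I$; explicitly $(\boldsymbol \theta_*^{(I)})_I = (\boldsymbol M_{II})^{-1}\boldsymbol r_I$ and $(\boldsymbol \theta_*^{(I)})_{I^c} = \mathbf{0}$, where $\boldsymbol M_{II}$ is the principal submatrix of $\boldsymbol M$ indexed by $I$ and $\boldsymbol r_I$ the subvector of $\boldsymbol r$ indexed by $I$. Vector inequalities are coordinatewise. *)

theory Defs
  imports "HOL-Analysis.Analysis"
begin

text \<open>Design matrix X with n rows (samples) and d columns (features); the feature
  dimension d and sample size n are the finite index types 'd and 'n.\<close>

definition gram :: "real^'d^'n \<Rightarrow> real^'d^'d" where
  "gram X = transpose X ** X"

definition corr :: "real^'d^'n \<Rightarrow> real^'n \<Rightarrow> real^'d" where
  "corr X y = transpose X *v y"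

definition fobj :: "real^'d^'n \<Rightarrow> real^'n \<Rightarrow> real^'d \<Rightarrow> real" where
  "fobj X y \<theta> = 1/2 * (norm y)^2 - inner (corr X y) \<theta> + 1/2 * inner \<theta> (gram X *v \<theta>)"

definition reg_obj :: "real^'d^'n \<Rightarrow> real^'n \<Rightarrow> real^'d \<Rightarrow> real \<Rightarrow> real^'d \<Rightarrow> real" where
  "reg_obj X y k s \<theta> = fobj X y \<theta> + (1/s) * inner k \<theta>"

definition nonneg_vec :: "real^'d \<Rightarrow> bool" where
  "nonneg_vec \<theta> \<longleftrightarrow> (\<forall>i. 0 \<le> \<theta> $ i)"

definition mu :: "real^'d^'n \<Rightarrow> real^'n \<Rightarrow> real^'d \<Rightarrow> real \<Rightarrow> real^'d" where
  "mu X y k s = (THE \<theta>. nonneg_vec \<theta> \<and>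
      (\<forall>\<theta>'. nonneg_vec \<theta>' \<longrightarrow> reg_obj X y k s \<theta> \<le> reg_obj X y k s \<theta>'))"

definition supp_mu :: "real^'d^'n \<Rightarrow> real^'n \<Rightarrow> real^'d \<Rightarrow> real \<Rightarrow> 'd set" where
  "supp_mu X y k s = {i. mu X y k s $ i > 0}"

text \<open>theta_*^(I): theta_I = (M_II)^{-1} r_I, theta_{I^c} = 0, written as the
  solution of the linear system M_II theta_I = r_I with theta vanishing off I.\<close>
definition theta_star :: "real^'d^'n \<Rightarrow> real^'n \<Rightarrow> 'd set \<Rightarrow> real^'d" where
  "theta_star X y I = (THE \<theta>. (\<forall>i. i \<notin> I \<longrightarrow> \<theta> $ i = 0) \<and>
      (\<forall>i\<in>I. (gram X *v \<theta>) $ i = corr X y $ i))"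

definition dln_field :: "real^'d^'n \<Rightarrow> real^'n \<Rightarrow> real^'d \<Rightarrow> real^'d" where
  "dln_field X y \<theta> = (\<chi> i. \<theta> $ i * (corr X y $ i - (gram X *v \<theta>) $ i))"

definition jump_points :: "real^'d^'n \<Rightarrow> real^'n \<Rightarrow> real^'d \<Rightarrow> real set" where
  "jump_points X y k = {s. 0 < s \<and> \<not> (\<exists>\<delta>>0. \<forall>s'. 0 < s' \<and> \<bar>s' - s\<bar> < \<delta> \<longrightarrow>
       supp_mu X y k s' = supp_mu X y k s)}"

end

theory Submission
  imports Defs
begin

lemma gram_sym: "gram X $ i $ j = gram X $ j $ i"
  by (simp add: gram_def matrix_matrix_mult_def transpose_def mult.commute)

lemma mv_nth: "(A *v v) $ i = (\<Sum>j\<in>UNIV. A $ i $ j * v $ j)"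
  by (simp add: matrix_vector_mult_def)

lemma gram_quad: "inner v (gram X *v v) = inner (X *v v) (X *v v)"
proof -
  have "inner v (gram X *v v) = inner v (transpose X *v (X *v v))"
    by (simp add: gram_def matrix_vector_mul_assoc)
  also have "\<dots> = inner (v v* transpose X) (X *v v)"
    by (simp only: dot_lmul_matrix)
  also have "\<dots> = inner (X *v v) (X *v v)"
    by (simp only: vector_transpose_matrix)
  finally show ?thesis .
qed

lemma corr_inner: "inner (corr X y) v = inner y (X *v v)"
proof -
  have "inner (corr X y) v = inner (y v* X) v"
    by (simp only: corr_def vector_transpose_matrix[symmetric] transpose_transpose)
  also have "\<dots> = inner y (X *v v)" by (simp only: dot_lmul_matrix)
  finally show ?thesis .
qed

lemma inner_sym_gram: "inner a (gram X *v b) = inner b (gram X *v a)"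
proof -
  have "inner a (gram X *v b) = (\<Sum>i\<in>UNIV. \<Sum>j\<in>UNIV. a$i * gram X $ i $ j * b $ j)"
    by (simp add: inner_vec_def mv_nth sum_distrib_left mult.assoc)
  also have "\<dots> = (\<Sum>j\<in>UNIV. \<Sum>i\<in>UNIV. a$i * gram X $ i $ j * b $ j)"
    by (rule sum.swap)
  also have "\<dots> = inner b (gram X *v a)"
    by (simp add: inner_vec_def mv_nth sum_distrib_left gram_sym[of X _ ] mult_ac)
  finally show ?thesis .
qed

lemma quad_nonneg: "0 \<le> inner v (gram X *v v)"
  by (simp add: gram_quad)

lemma inner_axis1: "inner (axis i 1) (v::real^'d) = v $ i"
  by (simp add: inner_axis')

lemma inner_axis2: "inner (v::real^'d) (axis i 1) = v $ i"
  by (simp add: inner_axis)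

lemma aux_lin: fixes c xb qb u kb xa qa ka p :: real
  shows "(c - xb + 1/2 * qb + u * kb) - (c - xa + 1/2 * qa + u * ka) = ((p - qa) - (xb - xa) + u * (kb - ka)) + 1/2 * (qb - 2 * p + qa)"
  by (simp add: algebra_simps)

lemma ev_pos_right: "eventually (\<lambda>x::real. 0 < x \<and> x < 1) (at_right 0)"
  unfolding eventually_at_right_field by (auto intro!: exI[of _ 1])

lemma Lg_lim: "filterlim (\<lambda>x::real. ln (1 / x)) at_top (at_right 0)"
proof -
  have "filterlim (\<lambda>x::real. ln (inverse x)) at_top (at_right 0)"
    by (rule filterlim_compose[OF ln_at_top filterlim_inverse_at_top_right])
  then show ?thesis by (simp add: inverse_eq_divide)
qed

lemma inv_ln_lim: "((\<lambda>x::real. 1 / ln (1 / x)) \<longlongrightarrow> 0) (at_right 0)"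
  by (rule tendsto_divide_0[OF tendsto_const filterlim_at_top_imp_at_infinity[OF Lg_lim]])

lemma exp_ln_lim: assumes "0 < c" shows "((\<lambda>x::real. exp (- (ln (1 / x) * c))) \<longlongrightarrow> 0) (at_right 0)"
proof -
  have "((\<lambda>x::real. x powr c) \<longlongrightarrow> 0) (at_right 0)"
    by (rule tendsto_zero_powrI[OF _ tendsto_const]) (use assms ev_pos_right in \<open>auto intro: tendsto_ident_at eventually_mono\<close>)
  moreover have "eventually (\<lambda>x::real. x powr c = exp (- (ln (1 / x) * c))) (at_right 0)"
    using ev_pos_right by eventually_elim (simp add: powr_def ln_div mult.commute)
  ultimately show ?thesis using tendsto_cong by fastforce
qed

locale dln =
  fixes X :: "real^'d^'n" and y :: "real^'n" and C k :: "real^'d"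
    and sol :: "real \<Rightarrow> real \<Rightarrow> real^'d"
  assumes r_pos: "\<forall>i. corr X y $ i > 0"
    and offdiag: "\<forall>i j. i \<noteq> j \<longrightarrow> gram X $ i $ j \<le> 0"
    and C_pos: "\<forall>i. C $ i > 0"
    and k_pos: "\<forall>i. k $ i > 0"
    and sol_init: "\<forall>\<epsilon>>0. sol \<epsilon> 0 = (\<chi> i. C $ i * \<epsilon> powr (k $ i))"
    and sol_ode: "\<forall>\<epsilon>>0. \<forall>t\<ge>0.
       (sol \<epsilon> has_vector_derivative dln_field X y (sol \<epsilon> t)) (at t within {0..})"
begin

abbreviation "M \<equiv> gram X"
abbreviation "r \<equiv> corr X y"

lemma quad_abs_le: "inner (\<chi> i. \<bar>v$i\<bar>) (M *v (\<chi> i. \<bar>v$i\<bar>)) \<le> inner v (M *v v)"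
proof -
  have "inner (\<chi> i. \<bar>v$i\<bar>) (M *v (\<chi> i. \<bar>v$i\<bar>)) = (\<Sum>i\<in>UNIV. \<Sum>j\<in>UNIV. \<bar>v$i\<bar> * M $ i $ j * \<bar>v $ j\<bar>)"
    by (simp add: inner_vec_def mv_nth sum_distrib_left mult.assoc)
  also have "\<dots> \<le> (\<Sum>i\<in>UNIV. \<Sum>j\<in>UNIV. v$i * M $ i $ j * v $ j)"
  proof (intro sum_mono)
    fix i j
    show "\<bar>v$i\<bar> * M $ i $ j * \<bar>v $ j\<bar> \<le> v$i * M $ i $ j * v $ j"
    proof (cases "i = j")
      case True then show ?thesis by (simp add: abs_mult_self_eq mult_ac)
    next
      case False
      then have "M $ i $ j \<le> 0" using offdiag by auto
      moreover have "v$i * v$j \<le> \<bar>v$i\<bar> * \<bar>v $ j\<bar>" by (metis abs_ge_self abs_mult)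
      ultimately have "M $ i $ j * (\<bar>v$i\<bar> * \<bar>v $ j\<bar>) \<le> M $ i $ j * (v$i * v$j)"
        by (simp add: mult_left_mono_neg)
      then show ?thesis by (simp add: mult_ac)
    qed
  qed
  also have "\<dots> = inner v (M *v v)"
    by (simp add: inner_vec_def mv_nth sum_distrib_left mult.assoc)
  finally show ?thesis .
qed

lemma quad_pos: assumes "v \<noteq> 0" shows "0 < inner v (M *v v)"
proof (rule ccontr)
  assume "\<not> 0 < inner v (M *v v)"
  define u where "u = (\<chi> i. \<bar>v$i\<bar>)"
  have "inner u (M *v u) \<le> 0" using quad_abs_le[of v] \<open>\<not> 0 < inner v (M *v v)\<close> unfolding u_def by linarith
  then have "inner (X *v u) (X *v u) = 0" using gram_quad[of u X] quad_nonneg[of u X] by linarith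
  then have "X *v u = 0" by simp
  then have "inner r u = 0" by (simp add: corr_inner)
  obtain i where "v $ i \<noteq> 0" using assms by (metis vec_eq_iff zero_index)
  have "r $ i * u $ i \<le> (\<Sum>j\<in>UNIV. r$j * u$j)"
    by (rule member_le_sum) (use r_pos in \<open>auto simp: u_def less_imp_le\<close>)
  moreover have "0 < r $ i * u $ i" using r_pos \<open>v $ i \<noteq> 0\<close> by (simp add: u_def)
  ultimately show False using \<open>inner r u = 0\<close> by (simp add: inner_vec_def)
qed

lemma quad_scale: "inner (c *\<^sub>R v) (M *v (c *\<^sub>R v)) = c^2 * inner v (M *v v)"
  by (simp add: matrix_vector_mult_scaleR power2_eq_square)

lemma lam_exists: "\<exists>lam>0. \<forall>v. lam * (norm v)^2 \<le> inner v (M *v v)"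
proof -
  obtain i :: 'd where True by simp
  have ne: "sphere (0::real^'d) 1 \<noteq> {}" using norm_axis_1[of i] by (metis mem_sphere_0 empty_iff)
  have "continuous_on (sphere 0 1) (\<lambda>v::real^'d. inner v (M *v v))"
    by (intro continuous_intros linear_continuous_on matrix_vector_mul_bounded_linear)
  then obtain v0 where v0: "v0 \<in> sphere 0 1" "\<forall>v\<in>sphere 0 1. inner v0 (M *v v0) \<le> inner v (M *v v)"
    using continuous_attains_inf[OF compact_sphere ne] by blast
  have "v0 \<noteq> 0" using v0(1) by auto
  then have pos: "0 < inner v0 (M *v v0)" by (rule quad_pos)
  show ?thesis
  proof (intro exI[of _ "inner v0 (M *v v0)"] conjI allI pos)
    fix v :: "real^'d"
    show "inner v0 (M *v v0) * (norm v)^2 \<le> inner v (M *v v)"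
    proof (cases "v = 0")
      case True then show ?thesis by simp
    next
      case False
      define u where "u = (1/norm v) *\<^sub>R v"
      have "u \<in> sphere 0 1" using False by (simp add: u_def)
      then have "inner v0 (M *v v0) \<le> inner u (M *v u)" using v0 by blast
      moreover have "v = norm v *\<^sub>R u" using False by (simp add: u_def)
      then have "inner v (M *v v) = (norm v)^2 * inner u (M *v u)" by (metis quad_scale)
      ultimately show ?thesis by (simp add: mult.commute mult_right_mono)
    qed
  qed
qed

lemma Mii_pos: "0 < M $ i $ i"
proof -
  have "0 < inner (axis i (1::real)) (M *v axis i 1)"
    by (rule quad_pos) (metis axis_nth zero_index zero_neq_one)
  moreover have "(M *v axis i 1) $ i = M $ i $ i"
    by (metis cart_eq_inner_axis matrix_vector_mul_component)
  ultimately show ?thesis by (simp add: inner_axis1)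
qed


definition grad :: "real \<Rightarrow> real^'d \<Rightarrow> real^'d" where
  "grad s \<theta> = M *v \<theta> - r + (1/s) *\<^sub>R k"

definition kkt :: "real \<Rightarrow> real^'d \<Rightarrow> bool" where
  "kkt s \<theta> \<longleftrightarrow> (\<forall>i. 0 \<le> \<theta>$i) \<and> (\<forall>i. 0 \<le> grad s \<theta> $ i) \<and> (\<forall>i. 0 < \<theta>$i \<longrightarrow> grad s \<theta> $ i = 0)"

lemma quad_diff: "inner (b - a) (M *v (b - a)) = inner b (M *v b) - 2 * inner b (M *v a) + inner a (M *v a)"
  using inner_sym_gram[of a X b]
  by (simp add: matrix_vector_mult_diff_distrib inner_diff_left inner_diff_right)

lemma reg_e1: "inner (b - a) (grad s a) = (inner b (M *v a) - inner a (M *v a)) - (inner b r - inner a r) + (1/s) * (inner b k - inner a k)"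
  unfolding grad_def by (simp only: inner_diff_right inner_add_right inner_scaleR_right inner_diff_left)

lemma reg_rb: "reg_obj X y k s b = 1/2*(norm y)^2 - inner b r + 1/2 * inner b (M *v b) + (1/s) * inner b k"
  by (simp add: reg_obj_def fobj_def inner_commute)

lemma reg_diff: "reg_obj X y k s b - reg_obj X y k s a = inner (b - a) (grad s a) + 1/2 * inner (b - a) (M *v (b - a))"
  unfolding reg_rb[of s b] reg_rb[of s a] reg_e1 quad_diff[of b a] by (rule aux_lin)

lemma kkt_inner0: assumes "kkt s a" shows "inner a (grad s a) = 0"
proof -
  have h: "a $ i * grad s a $ i = 0" for i
  proof (cases "a $ i = 0")
    case False
    have "0 \<le> a $ i" using assms by (simp add: kkt_def)
    then have "0 < a $ i" using False by (simp add: less_le)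
    then have "grad s a $ i = 0" using assms unfolding kkt_def by blast
    then show ?thesis by simp
  qed simp
  show ?thesis unfolding inner_vec_def inner_real_def by (intro sum.neutral ballI) (rule h)
qed

lemma kkt_inner_nonneg: "kkt s a \<Longrightarrow> \<forall>i. 0 \<le> b$i \<Longrightarrow> 0 \<le> inner b (grad s a)"
  unfolding kkt_def inner_vec_def
  by (intro sum_nonneg) simp

lemma kkt_min: assumes "kkt s a" "\<forall>i. 0 \<le> b$i"
  shows "reg_obj X y k s a + 1/2 * inner (b - a) (M *v (b - a)) \<le> reg_obj X y k s b"
  using reg_diff[of s b a] kkt_inner0[OF assms(1)] kkt_inner_nonneg[OF assms]
  by (simp add: inner_diff_left)

lemma kkt_unique: assumes "kkt s a" "kkt s b" shows "a = b"
proof (rule ccontr)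
  assume "a \<noteq> b"
  then have "0 < inner (b - a) (M *v (b - a))" "0 < inner (a - b) (M *v (a - b))" by (auto intro!: quad_pos)
  moreover have "\<forall>i. 0 \<le> b$i" "\<forall>i. 0 \<le> a$i" using assms by (auto simp: kkt_def)
  ultimately show False using kkt_min[OF assms(1)] kkt_min[OF assms(2)] by fastforce
qed

lemma reg_axis: "reg_obj X y k s (a + t *\<^sub>R axis i 1) - reg_obj X y k s a = t * grad s a $ i + 1/2 * t^2 * M $ i $ i"
proof -
  have "(M *v axis i 1) $ i = M $ i $ i"
    by (metis cart_eq_inner_axis matrix_vector_mul_component)
  then show ?thesis
    using reg_diff[of s "a + t *\<^sub>R axis i 1" a] quad_scale[of t "axis i 1"]
    by (simp add: inner_axis1)
qed

lemma min_kkt: assumes "s > 0" "\<forall>i. 0 \<le> a$i"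
  and min: "\<forall>b. (\<forall>i. 0 \<le> b$i) \<longrightarrow> reg_obj X y k s a \<le> reg_obj X y k s b"
  shows "kkt s a"
  unfolding kkt_def
proof (intro conjI allI impI)
  fix i
  show "0 \<le> a$i" using assms by auto
  have Mi: "0 < M $ i $ i" by (rule Mii_pos)
  show g: "0 \<le> grad s a $ i"
  proof (rule ccontr)
    assume neg: "\<not> 0 \<le> grad s a $ i"
    define t where "t = - grad s a $ i / M $ i $ i"
    have "t > 0" using neg Mi by (simp add: t_def divide_neg_pos)
    then have nn: "\<forall>j. 0 \<le> (a + t *\<^sub>R axis i 1) $ j" using assms(2) by (simp add: axis_def)
    define g where "g = grad s a $ i"
    define m where "m = M $ i $ i"
    have "t * g + 1/2 * t^2 * m = - (g * g) / (2 * m)"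
      using Mi by (simp add: t_def g_def m_def power2_eq_square field_simps)
    also have "\<dots> < 0"
    proof -
      have "0 < g * g" using neg by (simp add: g_def mult_neg_neg)
      then show ?thesis using Mi by (simp add: m_def)
    qed
    finally have "t * grad s a $ i + 1/2 * t^2 * M $ i $ i < 0" by (simp add: g_def m_def)
    then
    show False using reg_axis[of s a t i] min nn by fastforce
  qed
  assume pos: "0 < a$i"
  show "grad s a $ i = 0"
  proof (rule ccontr)
    assume "grad s a $ i \<noteq> 0"
    then have gp: "grad s a $ i > 0" using g by simp
    define t where "t = - min (a$i) (grad s a $ i / M $ i $ i)"
    have t1: "t < 0" using gp pos Mi by (simp add: t_def)
    have t2: "- t * M $ i $ i \<le> grad s a $ i"
    proof -
      have "min (a$i) (grad s a $ i / M $ i $ i) \<le> grad s a $ i / M $ i $ i" by simp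
      then have "M $ i $ i * min (a$i) (grad s a $ i / M $ i $ i) \<le> M $ i $ i * (grad s a $ i / M $ i $ i)"
        using Mi by (intro mult_left_mono) auto
      then show ?thesis using Mi by (simp add: t_def mult.commute)
    qed
    have t3: "0 \<le> a$i + t" by (simp add: t_def)
    have nn: "\<forall>j. 0 \<le> (a + t *\<^sub>R axis i 1) $ j" using assms(2) t3 by (simp add: axis_def)
    have "t * grad s a $ i + 1/2 * t^2 * M $ i $ i = t * (grad s a $ i + 1/2 * t * M $ i $ i)"
      by (simp add: power2_eq_square algebra_simps)
    also have "\<dots> < 0"
    proof -
      have h: "0 < - t * M $ i $ i" using t1 Mi by (simp add: mult_neg_pos)
      have "grad s a $ i + 1/2 * t * M $ i $ i = grad s a $ i - 1/2 * (- t * M $ i $ i)" by simp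
      then have "0 < grad s a $ i + 1/2 * t * M $ i $ i" using h t2 by linarith
      then show ?thesis using t1 by (intro mult_neg_pos)
    qed
    finally show False using reg_axis[of s a t i] min nn by fastforce
  qed
qed

lemma exists_min: assumes "s > 0"
  shows "\<exists>a. (\<forall>i. 0 \<le> a$i) \<and> (\<forall>b. (\<forall>i. 0 \<le> b$i) \<longrightarrow> reg_obj X y k s a \<le> reg_obj X y k s b)"
proof -
  obtain lam where lam: "lam > 0" "\<forall>v. lam * (norm v)^2 \<le> inner v (M *v v)" using lam_exists by blast
  define R where "R = 2 * norm r / lam"
  define S where "S = {x::real^'d. \<forall>i. 0 \<le> x$i} \<inter> cball 0 R"
  have "compact S" unfolding S_def
    using closed_Int_compact[OF closed_positive_orthant compact_cball] by blast
  have "0 \<in> S" unfolding S_def using lam by (simp add: R_def)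
  then have ne: "S \<noteq> {}" by blast
  have "continuous_on S (reg_obj X y k s)"
    unfolding reg_obj_def[abs_def] fobj_def
    by (intro continuous_intros linear_continuous_on matrix_vector_mul_bounded_linear)
  then obtain a where a: "a \<in> S" "\<forall>b\<in>S. reg_obj X y k s a \<le> reg_obj X y k s b"
    using continuous_attains_inf[OF \<open>compact S\<close> ne] by blast
  have "0 \<in> S" unfolding S_def using lam by (simp add: R_def)
  then have a0: "reg_obj X y k s a \<le> reg_obj X y k s 0" using a by blast
  show ?thesis
  proof (intro exI conjI allI impI)
    show "0 \<le> a $ i" for i using a(1) by (simp add: S_def)
    fix b :: "real^'d" assume b: "\<forall>i. 0 \<le> b$i"
    show "reg_obj X y k s a \<le> reg_obj X y k s b"
    proof (cases "b \<in> S")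
      case True then show ?thesis using a by blast
    next
      case False
      then have nb: "norm b > R" using b by (simp add: S_def)
      have d: "reg_obj X y k s b - reg_obj X y k s 0 = inner b (grad s 0) + 1/2 * inner b (M *v b)"
        using reg_diff[of s b 0] by simp
      have g0: "inner b (grad s 0) = - inner b r + (1/s) * inner b k"
        by (simp add: grad_def inner_diff_right inner_add_right)
      have "inner b k \<ge> 0" using b k_pos unfolding inner_vec_def
        by (intro sum_nonneg) (simp add: less_imp_le)
      then have "inner b k / s \<ge> 0" using assms by simp
      then have "- inner b r + (1/s) * inner b k \<ge> - norm b * norm r"
        using norm_cauchy_schwarz[of b r] by simp
      then have "reg_obj X y k s b - reg_obj X y k s 0 \<ge> - norm b * norm r + 1/2 * lam * (norm b)^2"
        using lam(2)[rule_format, of b] d g0 by linarith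
      moreover have "- norm b * norm r + 1/2 * lam * (norm b)^2 > 0"
      proof -
        have "norm b * lam > 2 * norm r" using nb lam(1) by (simp add: R_def field_simps)
        moreover have "norm b > 0" using nb lam(1) by (smt (verit) R_def divide_nonneg_pos norm_ge_zero)
        ultimately have "norm b * (norm b * lam - 2 * norm r) > 0" by simp
        then show ?thesis by (simp add: power2_eq_square algebra_simps)
      qed
      ultimately show ?thesis using a0 by linarith
    qed
  qed
qed

lemma mu_kkt: assumes "s > 0" shows "kkt s (mu X y k s)"
proof -
  obtain a where a: "\<forall>i. 0 \<le> a$i" "\<forall>b. (\<forall>i. 0 \<le> b$i) \<longrightarrow> reg_obj X y k s a \<le> reg_obj X y k s b"
    using exists_min[OF assms] by blast
  have ka: "kkt s a" using min_kkt[OF assms a] .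
  have "mu X y k s = a"
    unfolding mu_def nonneg_vec_def
  proof (rule the_equality)
    show "(\<forall>i. 0 \<le> a $ i) \<and> (\<forall>\<theta>'. (\<forall>i. 0 \<le> \<theta>' $ i) \<longrightarrow> reg_obj X y k s a \<le> reg_obj X y k s \<theta>')"
      using a by blast
    fix b assume "(\<forall>i. 0 \<le> b $ i) \<and> (\<forall>\<theta>'. (\<forall>i. 0 \<le> \<theta>' $ i) \<longrightarrow> reg_obj X y k s b \<le> reg_obj X y k s \<theta>')"
    then have "kkt s b" using min_kkt[OF assms] by blast
    then show "b = a" using kkt_unique ka by blast
  qed
  then show ?thesis using ka by simp
qed


lemma grad_nth: "grad s a $ i = (M *v a) $ i - r $ i + k $ i / s"
  by (simp add: grad_def)

lemma mu_nonneg: "0 < s \<Longrightarrow> 0 \<le> mu X y k s $ i"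
  using mu_kkt by (auto simp: kkt_def)

lemma mu_mono: assumes "0 < s" "s \<le> s'" shows "mu X y k s $ i \<le> mu X y k s' $ i"
proof -
  define a where "a = mu X y k s"
  define b where "b = mu X y k s'"
  have ka: "kkt s a" using mu_kkt assms by (simp add: a_def)
  have kb: "kkt s' b" using mu_kkt assms by (simp add: b_def)
  define d where "d = (\<chi> i. max (a$i - b$i) 0)"
  have trm: "d $ i * (M *v d) $ i \<le> 0" for i
  proof (cases "d $ i = 0")
    case True then show ?thesis by simp
  next
    case False
    then have dpos: "d $ i > 0" "a $ i > b $ i" by (auto simp: d_def max_def split: if_splits)
    have "b $ i \<ge> 0" using kb by (simp add: kkt_def)
    then have "a $ i > 0" using dpos by simp
    then have "grad s a $ i = 0" using ka unfolding kkt_def by blast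
    then have ga: "(M *v a) $ i = r $ i - k $ i / s" unfolding grad_nth by linarith
    have "(M *v b) $ i \<ge> r $ i - k $ i / s'" using kb by (simp add: kkt_def grad_nth) (smt (verit))
    moreover have "k $ i / s' \<le> k $ i / s" using assms k_pos by (intro divide_left_mono) (auto simp: less_imp_le)
    ultimately have "(M *v a) $ i - (M *v b) $ i \<le> 0" using ga by linarith
    moreover have "(M *v d) $ i \<le> (M *v a) $ i - (M *v b) $ i"
    proof -
      have "(M *v d) $ i = (\<Sum>j\<in>UNIV. M $ i $ j * d $ j)" by (rule mv_nth)
      also have "\<dots> \<le> (\<Sum>j\<in>UNIV. M $ i $ j * (a $ j - b $ j))"
      proof (intro sum_mono)
        fix j show "M $ i $ j * d $ j \<le> M $ i $ j * (a $ j - b $ j)"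
        proof (cases "j = i")
          case True then show ?thesis using dpos by (simp add: d_def)
        next
          case False then have "M $ i $ j \<le> 0" using offdiag by auto
          moreover have "a $ j - b $ j \<le> d $ j" by (simp add: d_def)
          ultimately show ?thesis by (simp add: mult_left_mono_neg)
        qed
      qed
      also have "\<dots> = (M *v a) $ i - (M *v b) $ i"
        by (simp add: mv_nth right_diff_distrib sum_subtractf)
      finally show ?thesis .
    qed
    ultimately show ?thesis using dpos by (simp add: mult_nonneg_nonpos)
  qed
  have "inner d (M *v d) \<le> 0" unfolding inner_vec_def using trm by (simp add: sum_nonpos)
  then have "d = 0" using quad_pos by (metis not_le)
  then have "d $ i = 0" by simp
  then show ?thesis by (simp add: d_def a_def b_def max_def split: if_splits)
qed

definition Phi :: "real \<Rightarrow> real^'d" where "Phi s = s *\<^sub>R mu X y k s"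
definition wPhi :: "real \<Rightarrow> real^'d" where "wPhi s = s *\<^sub>R r - k - M *v Phi s"

lemma wPhi_grad: "0 < s \<Longrightarrow> wPhi s $ i = - s * grad s (mu X y k s) $ i"
  by (simp add: wPhi_def Phi_def grad_nth matrix_vector_mult_scaleR algebra_simps)

lemma wPhi_nonpos: "0 < s \<Longrightarrow> wPhi s $ i \<le> 0"
  using mu_kkt[of s] by (simp add: wPhi_grad kkt_def)

lemma wPhi_zero: "0 < s \<Longrightarrow> 0 < mu X y k s $ i \<Longrightarrow> wPhi s $ i = 0"
  using mu_kkt[of s] by (simp add: wPhi_grad kkt_def)

lemma Phi_nonneg: "0 < s \<Longrightarrow> 0 \<le> Phi s $ i"
  by (simp add: Phi_def mu_nonneg)

lemma Phi_mono: "0 < s \<Longrightarrow> s \<le> s' \<Longrightarrow> Phi s $ i \<le> Phi s' $ i"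
  unfolding Phi_def using mu_mono[of s s' i] mu_nonneg[of s i]
  by (simp add: mult_mono)

lemma inner_Phi_wPhi: assumes "0 < s" shows "inner (Phi s) (wPhi s) = 0"
proof -
  have h: "Phi s $ i * wPhi s $ i = 0" for i
  proof (cases "0 < mu X y k s $ i")
    case True then show ?thesis using wPhi_zero assms by simp
  next
    case False then have "mu X y k s $ i = 0" using mu_nonneg[OF assms, of i] by simp
    then show ?thesis by (simp add: Phi_def)
  qed
  show ?thesis unfolding inner_vec_def inner_real_def by (intro sum.neutral ballI) (rule h)
qed

lemma stability:
  assumes "0 < s" "\<forall>i. 0 \<le> Th $ i"
  shows "inner (Th - Phi s) (M *v (Th - Phi s)) \<le> - inner Th (s *\<^sub>R r - k - M *v Th) + inner (Phi s) (s *\<^sub>R r - k - M *v Th)"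
proof -
  define w where "w = s *\<^sub>R r - k - M *v Th"
  have "M *v (Th - Phi s) = wPhi s - w"
    by (simp add: w_def wPhi_def matrix_vector_mult_diff_distrib)
  then have "inner (Th - Phi s) (M *v (Th - Phi s)) = inner Th (wPhi s) - inner (Phi s) (wPhi s) - inner Th w + inner (Phi s) w"
    by (simp add: inner_diff_left inner_diff_right)
  moreover have "inner Th (wPhi s) \<le> 0" unfolding inner_vec_def
    using assms wPhi_nonpos by (intro sum_nonpos) (simp add: mult_nonneg_nonpos)
  ultimately show ?thesis using inner_Phi_wPhi[OF assms(1)] by (simp add: w_def)
qed

lemma supp_mono: "0 < s \<Longrightarrow> s \<le> s' \<Longrightarrow> supp_mu X y k s \<subseteq> supp_mu X y k s'"
  unfolding supp_mu_def using mu_mono by (auto intro: less_le_trans)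

lemma finite_jumps: "finite (jump_points X y k)"
proof -
  define S where "S A = {s. 0 < s \<and> supp_mu X y k s = A}" for A
  have "jump_points X y k \<subseteq> (\<Union>A. {Inf (S A), Sup (S A)})"
  proof
    fix s0 assume J: "s0 \<in> jump_points X y k"
    then have s0: "0 < s0" by (simp add: jump_points_def)
    define A where "A = supp_mu X y k s0"
    have inS: "s0 \<in> S A" using s0 by (simp add: S_def A_def)
    show "s0 \<in> (\<Union>A. {Inf (S A), Sup (S A)})"
    proof (cases "(\<exists>a\<in>S A. a < s0) \<and> (\<exists>b\<in>S A. s0 < b)")
      case True
      then obtain a b where ab: "a \<in> S A" "a < s0" "b \<in> S A" "s0 < b" by blast
      have "\<forall>s'. 0 < s' \<and> \<bar>s' - s0\<bar> < min (s0 - a) (b - s0) \<longrightarrow> supp_mu X y k s' = supp_mu X y k s0"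
      proof (intro allI impI)
        fix s' assume s': "0 < s' \<and> \<bar>s' - s0\<bar> < min (s0 - a) (b - s0)"
        then have "a < s'" "s' < b" by auto
        have "0 < a" using ab by (simp add: S_def)
        have "supp_mu X y k a \<subseteq> supp_mu X y k s'" using supp_mono \<open>0 < a\<close> \<open>a < s'\<close> by simp
        moreover have "supp_mu X y k s' \<subseteq> supp_mu X y k b" using supp_mono s' \<open>s' < b\<close> by simp
        ultimately show "supp_mu X y k s' = supp_mu X y k s0" using ab by (auto simp: S_def A_def)
      qed
      moreover have "0 < min (s0 - a) (b - s0)" using ab by simp
      ultimately show ?thesis using J unfolding jump_points_def by blast
    next
      case False
      then consider "\<forall>a\<in>S A. s0 \<le> a" | "\<forall>b\<in>S A. b \<le> s0" by (meson not_le)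
      then show ?thesis
      proof cases
        case 1 then have "Inf (S A) = s0" by (intro cInf_eq_minimum inS) auto
        then show ?thesis by blast
      next
        case 2 then have "Sup (S A) = s0" by (intro cSup_eq_maximum inS) auto
        then show ?thesis by blast
      qed
    qed
  qed
  moreover have "finite (\<Union>A. {Inf (S A), Sup (S A)})" by simp
  ultimately show ?thesis by (rule finite_subset)
qed

end


context dln begin

lemma mvt_le:
  fixes f :: "real \<Rightarrow> real"
  assumes "a \<le> b" "continuous_on {a..b} f"
    and "\<And>x. a < x \<Longrightarrow> x < b \<Longrightarrow> (f has_real_derivative f' x) (at x)"
    and "\<And>x. a < x \<Longrightarrow> x < b \<Longrightarrow> f' x \<le> m"
  shows "f b - f a \<le> m * (b - a)"
proof (cases "a = b")
  case True then show ?thesis by simp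
next
  case False
  then have "a < b" using assms by simp
  obtain l z where z: "a < z" "z < b" "DERIV f z :> l" "f b - f a = (b - a) * l"
    using MVT[OF \<open>a < b\<close> assms(2)] assms(3) real_differentiable_def by meson
  have "l = f' z" using DERIV_unique[OF z(3) assms(3)[OF z(1,2)]] .
  then have "l \<le> m" using assms(4)[OF z(1,2)] by simp
  then show ?thesis using z(4) \<open>a < b\<close> by (simp add: mult.commute mult_right_mono)
qed

lemma mvt_ge:
  fixes f :: "real \<Rightarrow> real"
  assumes "a \<le> b" "continuous_on {a..b} f"
    and "\<And>x. a < x \<Longrightarrow> x < b \<Longrightarrow> (f has_real_derivative f' x) (at x)"
    and "\<And>x. a < x \<Longrightarrow> x < b \<Longrightarrow> m \<le> f' x"
  shows "m * (b - a) \<le> f b - f a"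
proof -
  have "(-f) b - (-f) a \<le> (-m) * (b - a)"
    by (rule mvt_le[OF assms(1), of "-f" "\<lambda>x. - f' x"])
       (use assms in \<open>auto intro!: derivative_eq_intros continuous_intros simp: fun_Compl_def\<close>)
  then show ?thesis by simp
qed

definition lam :: real where "lam = (SOME l. l > 0 \<and> (\<forall>v. l * (norm v)^2 \<le> inner v (M *v v)))"

lemma lam: "lam > 0" "lam * (norm v)^2 \<le> inner v (M *v v)"
  using someI_ex[OF lam_exists] unfolding lam_def by auto

definition Bc :: real where "Bc = (\<Sum>i\<in>UNIV. \<Sum>j\<in>UNIV. \<bar>M $ i $ j\<bar> * C $ i * C $ j)"
definition Bn :: real where "Bn = (2 * norm r + Bc) / lam + 1"

lemma quad_le_abs: "inner v (M *v v) \<le> (\<Sum>i\<in>UNIV. \<Sum>j\<in>UNIV. \<bar>M $ i $ j\<bar> * \<bar>v $ i\<bar> * \<bar>v $ j\<bar>)"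
proof -
  have "inner v (M *v v) = (\<Sum>i\<in>UNIV. \<Sum>j\<in>UNIV. v$i * M $ i $ j * v $ j)"
    by (simp add: inner_vec_def mv_nth sum_distrib_left mult.assoc)
  also have "\<dots> \<le> (\<Sum>i\<in>UNIV. \<Sum>j\<in>UNIV. \<bar>M $ i $ j\<bar> * \<bar>v $ i\<bar> * \<bar>v $ j\<bar>)"
  proof (intro sum_mono)
    fix i j
    have "v$i * M $ i $ j * v $ j \<le> \<bar>v$i * M $ i $ j * v $ j\<bar>" by (rule abs_ge_self)
    also have "\<dots> = \<bar>M $ i $ j\<bar> * \<bar>v $ i\<bar> * \<bar>v $ j\<bar>" by (simp add: abs_mult mult_ac)
    finally show "v$i * M $ i $ j * v $ j \<le> \<bar>M $ i $ j\<bar> * \<bar>v $ i\<bar> * \<bar>v $ j\<bar>" .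
  qed
  finally show ?thesis .
qed

lemma Bc_nonneg: "0 \<le> Bc"
  unfolding Bc_def using C_pos by (intro sum_nonneg) (simp add: less_imp_le)

lemma Bn_ge1: "1 \<le> Bn"
  unfolding Bn_def using Bc_nonneg lam(1) by (simp add: divide_nonneg_pos)

context
  fixes eps :: real
  assumes eps_pos: "0 < eps"
begin

abbreviation "th \<equiv> sol eps"

definition G :: "real \<Rightarrow> real^'d" where "G t = integral {0..t} th"

lemma th_deriv_within: "0 \<le> t \<Longrightarrow> (th has_vector_derivative dln_field X y (th t)) (at t within {0..})"
  using sol_ode eps_pos by blast

lemma th_deriv: "0 < t \<Longrightarrow> (th has_vector_derivative dln_field X y (th t)) (at t)"
  using th_deriv_within[of t] at_within_interior[of t "{0..}"] by simp

lemma th_cont: "continuous_on {0..} th"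
  unfolding continuous_on_eq_continuous_within
proof
  fix t :: real assume "t \<in> {0..}"
  then show "continuous (at t within {0..}) th"
    using th_deriv_within[of t] has_vector_derivative_continuous by simp
qed

lemma th_cont_i: "continuous_on {0..} (\<lambda>t. th t $ i)"
  by (rule continuous_on_component[OF th_cont])

lemma th_comp_deriv: "0 < t \<Longrightarrow> ((\<lambda>t. th t $ i) has_real_derivative (th t $ i * (r $ i - (M *v th t) $ i))) (at t)"
  using bounded_linear.has_vector_derivative[OF bounded_linear_vec_nth th_deriv, of t i]
  by (simp add: has_real_derivative_iff_has_vector_derivative dln_field_def)

lemma G_deriv_within: "0 \<le> t \<Longrightarrow> t \<le> T \<Longrightarrow> (G has_vector_derivative th t) (at t within {0..T})"
  unfolding G_def
  by (rule integral_has_vector_derivative) (auto intro: continuous_on_subset[OF th_cont])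

lemma G_deriv: "0 < t \<Longrightarrow> (G has_vector_derivative th t) (at t)"
  using G_deriv_within[of t "t+1"] at_within_interior[of t "{0..t+1}"] by simp

lemma G_cont: "continuous_on {0..T} G"
  unfolding continuous_on_eq_continuous_within
proof
  fix t :: real assume "t \<in> {0..T}"
  then show "continuous (at t within {0..T}) G"
    using G_deriv_within[of t T] has_vector_derivative_continuous by simp
qed

lemma G0: "G 0 = 0"
  by (simp add: G_def)

lemma bl_Mi: "bounded_linear (\<lambda>v::real^'d. (M *v v) $ i)"
  using bounded_linear_compose[OF bounded_linear_vec_nth matrix_vector_mul_bounded_linear] .

lemma MG_deriv: "0 < t \<Longrightarrow> ((\<lambda>t. (M *v G t) $ i) has_real_derivative (M *v th t) $ i) (at t)"
  using bounded_linear.has_vector_derivative[OF bl_Mi G_deriv, of t i]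
  by (simp add: has_real_derivative_iff_has_vector_derivative)

lemma MG_cont: "continuous_on {0..T} (\<lambda>t. (M *v G t) $ i)"
  by (intro continuous_on_compose2[OF linear_continuous_on[OF bl_Mi] G_cont]) auto

lemma Gi_deriv: "0 < t \<Longrightarrow> ((\<lambda>t. G t $ i) has_real_derivative th t $ i) (at t)"
  using bounded_linear.has_vector_derivative[OF bounded_linear_vec_nth G_deriv, of t i]
  by (simp add: has_real_derivative_iff_has_vector_derivative)

lemma Gi_cont: "continuous_on {0..T} (\<lambda>t. G t $ i)"
  by (rule continuous_on_component[OF G_cont])

lemma th_formula: assumes "0 \<le> t"
  shows "th t $ i = th 0 $ i * exp (r $ i * t - (M *v G t) $ i)"
proof -
  define h where "h x = th x $ i * exp (- (r $ i * x - (M *v G x) $ i))" for x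
  have hc: "continuous_on {0..t} h" unfolding h_def
    by (intro continuous_intros continuous_on_subset[OF th_cont_i] MG_cont) auto
  have hd: "(h has_real_derivative 0) (at x)" if "0 < x" for x
  proof -
    have e: "((\<lambda>x. - (r $ i * x - (M *v G x) $ i)) has_real_derivative - (r $ i * 1 - (M *v th x) $ i)) (at x)"
      by (intro DERIV_minus DERIV_diff DERIV_cmult DERIV_ident MG_deriv that)
    have e2: "((\<lambda>x. exp (- (r $ i * x - (M *v G x) $ i))) has_real_derivative
        exp (- (r $ i * x - (M *v G x) $ i)) * (- (r $ i * 1 - (M *v th x) $ i))) (at x)"
      by (rule DERIV_fun_exp[OF e])
    have "(h has_real_derivative (th x $ i * (r $ i - (M *v th x) $ i)) * exp (- (r $ i * x - (M *v G x) $ i))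
       + exp (- (r $ i * x - (M *v G x) $ i)) * (- (r $ i * 1 - (M *v th x) $ i)) * th x $ i) (at x)"
      unfolding h_def by (rule DERIV_mult[OF th_comp_deriv[OF that] e2])
    moreover have "(th x $ i * (r $ i - (M *v th x) $ i)) * exp (- (r $ i * x - (M *v G x) $ i))
       + exp (- (r $ i * x - (M *v G x) $ i)) * (- (r $ i * 1 - (M *v th x) $ i)) * th x $ i = 0"
      by (simp add: algebra_simps)
    ultimately show ?thesis by simp
  qed
  have "h t - h 0 \<le> 0 * (t - 0)" by (rule mvt_le[OF assms hc hd]) auto
  moreover have "0 * (t - 0) \<le> h t - h 0" by (rule mvt_ge[OF assms hc hd]) auto
  ultimately have "h t = h 0" by simp
  moreover have "h 0 = th 0 $ i" by (simp add: h_def G0)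
  ultimately have "h t = th 0 $ i" by simp
  then have e: "th t $ i * exp (- (r $ i * t - (M *v G t) $ i)) = th 0 $ i"
    by (simp only: h_def)
  define E where "E = r $ i * t - (M *v G t) $ i"
  have e': "th t $ i * exp (- E) = th 0 $ i" using e by (simp only: E_def)
  have one: "exp (- E) * exp E = 1" by (simp add: exp_minus)
  have "th t $ i = th t $ i * (exp (- E) * exp E)" by (simp only: one mult_1_right)
  also have "\<dots> = (th t $ i * exp (- E)) * exp E" by (simp only: mult.assoc)
  also have "\<dots> = th 0 $ i * exp E" by (simp only: e')
  finally show ?thesis by (simp only: E_def)
qed

lemma th0: "th 0 $ i = C $ i * eps powr (k $ i)"
  using sol_init eps_pos by simp

lemma th_pos: "0 \<le> t \<Longrightarrow> 0 < th t $ i"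
  using th_formula[of t i] th0[of i] C_pos eps_pos by simp


lemma Mth_deriv: "0 < t \<Longrightarrow> ((\<lambda>t. M *v th t) has_vector_derivative M *v dln_field X y (th t)) (at t)"
  by (rule bounded_linear.has_vector_derivative[OF matrix_vector_mul_bounded_linear th_deriv])

lemma fobj_deriv: assumes "0 < t"
  shows "((\<lambda>t. fobj X y (th t)) has_real_derivative inner (dln_field X y (th t)) (M *v th t - r)) (at t)"
proof -
  define D where "D = dln_field X y (th t)"
  have d1: "((\<lambda>t. inner r (th t)) has_vector_derivative inner r D) (at t)"
    unfolding D_def by (rule bounded_linear.has_vector_derivative[OF bounded_linear_inner_right th_deriv[OF assms]])
  have d2: "((\<lambda>t. inner (th t) (M *v th t)) has_vector_derivative (inner (th t) (M *v D) + inner D (M *v th t))) (at t)"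
    unfolding D_def by (rule bounded_bilinear.has_vector_derivative[OF bounded_bilinear_inner th_deriv[OF assms] Mth_deriv[OF assms]])
  have d1': "((\<lambda>t. inner r (th t)) has_real_derivative inner r D) (at t)"
    using d1 by (simp add: has_real_derivative_iff_has_vector_derivative)
  have d2': "((\<lambda>t. inner (th t) (M *v th t)) has_real_derivative (inner (th t) (M *v D) + inner D (M *v th t))) (at t)"
    using d2 by (simp add: has_real_derivative_iff_has_vector_derivative)
  have "((\<lambda>t. 1/2 * (norm y)^2 - inner r (th t) + 1/2 * inner (th t) (M *v th t)) has_real_derivative
      (0 - inner r D + 1/2 * (inner (th t) (M *v D) + inner D (M *v th t)))) (at t)"
    by (intro DERIV_add DERIV_diff DERIV_const DERIV_cmult d1' d2')
  moreover have "0 - inner r D + 1/2 * (inner (th t) (M *v D) + inner D (M *v th t)) = inner D (M *v th t - r)"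
    using inner_sym_gram[of "th t" X D] by (simp add: inner_diff_right inner_commute)
  ultimately show ?thesis
    unfolding fobj_def D_def by simp
qed

lemma fobj_deriv_nonpos: assumes "\<forall>i. 0 \<le> v $ i" shows "inner (dln_field X y v) (M *v v - r) \<le> 0"
proof -
  have "inner (dln_field X y v) (M *v v - r) = - (\<Sum>i\<in>UNIV. v $ i * (r $ i - (M *v v) $ i)^2)"
    by (simp add: inner_vec_def dln_field_def power2_eq_square sum_negf[symmetric] algebra_simps)
  also have "\<dots> \<le> 0" using assms by (simp add: sum_nonneg)
  finally show ?thesis .
qed

lemma Mth_cont: "continuous_on {0..} (\<lambda>t. M *v th t)"
  by (rule continuous_on_compose2[OF linear_continuous_on[OF matrix_vector_mul_bounded_linear] th_cont]) auto

lemma fobj_cont: "continuous_on {0..} (\<lambda>t. fobj X y (th t))"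
  unfolding fobj_def by (intro continuous_intros th_cont Mth_cont)

lemma fobj_mono: assumes "0 \<le> t" "t \<le> t'" shows "fobj X y (th t') \<le> fobj X y (th t)"
proof -
  have "fobj X y (th t') - fobj X y (th t) \<le> 0 * (t' - t)"
  proof (rule mvt_le[OF assms(2)])
    show "continuous_on {t..t'} (\<lambda>t. fobj X y (th t))"
      using assms by (intro continuous_on_subset[OF fobj_cont]) auto
    show "((\<lambda>t. fobj X y (th t)) has_real_derivative inner (dln_field X y (th x)) (M *v th x - r)) (at x)"
      if "t < x" for x using assms that by (intro fobj_deriv) auto
    show "inner (dln_field X y (th x)) (M *v th x - r) \<le> 0" if "t < x" for x
      using assms that th_pos by (intro fobj_deriv_nonpos) (auto simp: less_imp_le)
  qed
  then show ?thesis by simp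
qed

lemma fobj_lower: "fobj X y v \<ge> 1/2 * (norm y)^2 - norm r * norm v + 1/2 * lam * (norm v)^2"
  using norm_cauchy_schwarz[of r v] lam(2)[of v] by (simp add: fobj_def)


lemma th_norm_bound: assumes "eps \<le> 1" "0 \<le> t" shows "norm (th t) \<le> Bn"
proof (rule ccontr)
  assume "\<not> norm (th t) \<le> Bn"
  define n where "n = norm (th t)"
  have nB: "n > Bn" using \<open>\<not> norm (th t) \<le> Bn\<close> by (simp add: n_def)
  have f0: "fobj X y (th 0) \<le> 1/2 * (norm y)^2 + 1/2 * Bc"
  proof -
    have "inner r (th 0) \<ge> 0" unfolding inner_vec_def using r_pos th_pos[of 0]
      by (intro sum_nonneg) (simp add: less_imp_le)
    moreover have "inner (th 0) (M *v th 0) \<le> Bc"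
    proof -
      have le: "\<bar>th 0 $ i\<bar> \<le> C $ i" for i
      proof -
        have "eps powr (k $ i) \<le> 1" using assms(1) eps_pos k_pos by (simp add: powr_le1 less_imp_le)
        then show ?thesis using th0[of i] C_pos eps_pos by (simp add: mult_left_le abs_mult less_imp_le)
      qed
      have "inner (th 0) (M *v th 0) \<le> (\<Sum>i\<in>UNIV. \<Sum>j\<in>UNIV. \<bar>M $ i $ j\<bar> * \<bar>th 0 $ i\<bar> * \<bar>th 0 $ j\<bar>)"
        by (rule quad_le_abs)
      also have "\<dots> \<le> Bc" unfolding Bc_def
        by (intro sum_mono mult_mono le) (use C_pos in \<open>auto simp: less_imp_le\<close>)
      finally show ?thesis .
    qed
    ultimately show ?thesis by (simp add: fobj_def)
  qed
  have "fobj X y (th t) \<le> fobj X y (th 0)" using fobj_mono[of 0 t] assms by simp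
  then have "- norm r * n + 1/2 * lam * n^2 \<le> 1/2 * Bc"
    using f0 fobj_lower[of "th t"] by (simp add: n_def)
  moreover have "- norm r * n + 1/2 * lam * n^2 > 1/2 * Bc"
  proof -
    have n1: "n \<ge> 1" using nB Bn_ge1 by simp
    have "lam * (n - 1) > 2 * norm r + Bc" using nB lam(1) by (simp add: Bn_def field_simps)
    then have "lam * n - 2 * norm r > Bc + lam" by (simp add: algebra_simps)
    then have "n * (lam * n - 2 * norm r) \<ge> 1 * (Bc + lam)"
      using n1 Bc_nonneg lam(1) by (intro mult_mono) auto
    then have "n * (lam * n - 2 * norm r) > Bc" using lam(1) by simp
    then show ?thesis by (simp add: power2_eq_square algebra_simps)
  qed
  ultimately show False by simp
qed

lemma th_le_Bn: assumes "eps \<le> 1" "0 \<le> t" shows "th t $ i \<le> Bn"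
proof -
  have "th t $ i \<le> \<bar>th t $ i\<bar>" by (rule abs_ge_self)
  also have "\<dots> \<le> norm (th t)" by (rule component_le_norm_cart)
  also have "\<dots> \<le> Bn" by (rule th_norm_bound[OF assms])
  finally show ?thesis .
qed

lemma Gi_mono: assumes "0 \<le> t" "t \<le> t'" shows "G t $ i \<le> G t' $ i"
proof -
  have "0 * (t' - t) \<le> G t' $ i - G t $ i"
  proof (rule mvt_ge[OF assms(2), of _ "\<lambda>x. th x $ i"])
    show "continuous_on {t..t'} (\<lambda>x. G x $ i)"
      using assms by (intro continuous_on_subset[OF Gi_cont[of t']]) auto
    fix x assume x: "t < x" "x < t'"
    show "((\<lambda>x. G x $ i) has_real_derivative th x $ i) (at x)" using assms x by (intro Gi_deriv) auto
    show "0 \<le> th x $ i" using th_pos[of x i] assms x by simp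
  qed
  then show ?thesis by simp
qed

lemma Gi_lip: assumes "0 \<le> t" "t \<le> t'" "\<And>x. t < x \<Longrightarrow> x < t' \<Longrightarrow> th x $ i \<le> m"
  shows "G t' $ i - G t $ i \<le> m * (t' - t)"
proof (rule mvt_le[OF assms(2), of _ "\<lambda>x. th x $ i"])
  show "continuous_on {t..t'} (\<lambda>x. G x $ i)"
    using assms by (intro continuous_on_subset[OF Gi_cont[of t']]) auto
  fix x assume x: "t < x" "x < t'"
  show "((\<lambda>x. G x $ i) has_real_derivative th x $ i) (at x)" using assms x by (intro Gi_deriv) auto
  show "th x $ i \<le> m" using assms(3) x by simp
qed

definition Wf :: "real^'d \<Rightarrow> real \<Rightarrow> real" where
  "Wf ts x = (\<Sum>i\<in>UNIV. th x $ i - ts $ i * ln (th x $ i))"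

lemma ln_th_deriv: assumes "0 < x"
  shows "((\<lambda>x. ln (th x $ i)) has_real_derivative (r $ i - (M *v th x) $ i)) (at x)"
proof -
  have p: "0 < th x $ i" using th_pos assms by simp
  have "((\<lambda>x. ln (th x $ i)) has_real_derivative inverse (th x $ i) * (th x $ i * (r $ i - (M *v th x) $ i))) (at x)"
    by (rule DERIV_chain2[OF DERIV_ln[OF p] th_comp_deriv[OF assms]])
  moreover have "inverse (th x $ i) * (th x $ i * (r $ i - (M *v th x) $ i)) = r $ i - (M *v th x) $ i"
    using p by (simp add: field_simps)
  ultimately show ?thesis by (simp only:)
qed

lemma Wf_deriv: assumes "0 < x"
  shows "(Wf ts has_real_derivative inner (th x - ts) (r - M *v th x)) (at x)"
proof -
  have "(Wf ts has_real_derivative (\<Sum>i\<in>UNIV. th x $ i * (r $ i - (M *v th x) $ i) - ts $ i * (r $ i - (M *v th x) $ i))) (at x)"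
    unfolding Wf_def[abs_def]
    by (intro DERIV_sum DERIV_diff DERIV_cmult th_comp_deriv ln_th_deriv assms)
  moreover have "(\<Sum>i\<in>UNIV. th x $ i * (r $ i - (M *v th x) $ i) - ts $ i * (r $ i - (M *v th x) $ i))
      = inner (th x - ts) (r - M *v th x)"
    unfolding inner_vec_def by (intro sum.cong) (auto simp: algebra_simps)
  ultimately show ?thesis by simp
qed

lemma Wf_cont: "continuous_on {0..} (Wf ts)"
proof -
  have l: "continuous_on {0..} (\<lambda>x. ln (th x $ i))" for i
    by (rule continuous_on_ln[OF th_cont_i]) (use th_pos in \<open>auto simp: less_le\<close>)
  show ?thesis unfolding Wf_def[abs_def]
    by (intro continuous_on_sum continuous_on_diff continuous_on_mult continuous_on_const th_cont_i l)
qed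


definition Lg :: real where "Lg = ln (1 / eps)"
definition Th :: "real \<Rightarrow> real^'d" where "Th s = (1 / Lg) *\<^sub>R G (s * Lg)"
definition ww :: "real \<Rightarrow> real^'d" where "ww s = s *\<^sub>R r - k - M *v Th s"

lemma Lg_pos: "eps < 1 \<Longrightarrow> 0 < Lg"
  using eps_pos by (simp add: Lg_def)

lemma ln_eps: "ln eps = - Lg"
  using eps_pos by (simp add: Lg_def ln_div)

lemma MTh: "(M *v Th s) $ i = (M *v G (s * Lg)) $ i / Lg"
  by (simp add: Th_def matrix_vector_mult_scaleR)

lemma th_scaled: assumes "eps < 1" "0 \<le> s"
  shows "th (s * Lg) $ i = C $ i * exp (Lg * ww s $ i)"
proof -
  have L: "0 < Lg" using Lg_pos assms by simp
  have "th (s * Lg) $ i = th 0 $ i * exp (r $ i * (s * Lg) - (M *v G (s * Lg)) $ i)"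
    using th_formula[of "s * Lg" i] assms L by simp
  also have "th 0 $ i = C $ i * exp (- (k $ i * Lg))"
    using th0[of i] eps_pos ln_eps by (simp add: powr_def)
  also have "C $ i * exp (- (k $ i * Lg)) * exp (r $ i * (s * Lg) - (M *v G (s * Lg)) $ i)
      = C $ i * exp (- (k $ i * Lg) + (r $ i * (s * Lg) - (M *v G (s * Lg)) $ i))"
    by (simp only: exp_add mult.assoc)
  also have "- (k $ i * Lg) + (r $ i * (s * Lg) - (M *v G (s * Lg)) $ i) = Lg * ww s $ i"
    using L by (simp add: ww_def MTh algebra_simps)
  finally show ?thesis .
qed

lemma ww_upper: assumes "eps < 1" "0 \<le> s" shows "ww s $ i \<le> ln (Bn / C $ i) / Lg"
proof -
  have L: "0 < Lg" using Lg_pos assms by simp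
  have "C $ i * exp (Lg * ww s $ i) \<le> Bn"
    using th_le_Bn[of "s * Lg" i] th_scaled[OF assms, of i] assms L by simp
  then have "exp (Lg * ww s $ i) \<le> Bn / C $ i" using C_pos by (simp add: field_simps mult.commute)
  then have "Lg * ww s $ i \<le> ln (Bn / C $ i)"
    using C_pos Bn_ge1 by (subst ln_ge_iff) auto
  then show ?thesis using L by (simp add: field_simps mult.commute)
qed

lemma Th0: "Th 0 = 0"
  by (simp add: Th_def G0)

lemma Th_mono: assumes "eps < 1" "0 \<le> s" "s \<le> s'" shows "Th s $ i \<le> Th s' $ i"
proof -
  have L: "0 < Lg" using Lg_pos assms by simp
  have "G (s * Lg) $ i \<le> G (s' * Lg) $ i" using Gi_mono assms L by (simp add: mult_right_mono)
  then show ?thesis using L by (simp add: Th_def divide_right_mono)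
qed

lemma Th_nonneg: "eps < 1 \<Longrightarrow> 0 \<le> s \<Longrightarrow> 0 \<le> Th s $ i"
  using Th_mono[of 0 s i] by (simp add: Th0)

lemma Th_lip: assumes "eps < 1" "0 \<le> s" "s \<le> s'" "\<And>x. s < x \<Longrightarrow> x < s' \<Longrightarrow> th (x * Lg) $ i \<le> m"
  shows "Th s' $ i - Th s $ i \<le> m * (s' - s)"
proof -
  have L: "0 < Lg" using Lg_pos assms by simp
  have "G (s' * Lg) $ i - G (s * Lg) $ i \<le> m * (s' * Lg - s * Lg)"
  proof (rule Gi_lip)
    show "0 \<le> s * Lg" "s * Lg \<le> s' * Lg" using assms L by (auto simp: mult_right_mono)
    fix x assume "s * Lg < x" "x < s' * Lg"
    then have "s < x / Lg" "x / Lg < s'" using L by (auto simp: field_simps)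
    then have "th (x / Lg * Lg) $ i \<le> m" by (rule assms(4))
    then show "th x $ i \<le> m" using L by simp
  qed
  then have "(G (s' * Lg) $ i - G (s * Lg) $ i) / Lg \<le> m * (s' - s)"
    using L by (simp add: field_simps)
  then show ?thesis by (simp add: Th_def diff_divide_distrib)
qed

lemma Th_le: assumes "eps < 1" "0 \<le> s" shows "Th s $ i \<le> s * Bn"
proof -
  have L: "0 < Lg" using Lg_pos assms by simp
  have "Th s $ i - Th 0 $ i \<le> Bn * (s - 0)"
  proof (rule Th_lip[OF assms(1) order_refl assms(2)])
    fix x assume "0 < x" "x < s"
    then show "th (x * Lg) $ i \<le> Bn" using th_le_Bn[of "x * Lg" i] assms L by simp
  qed
  then show ?thesis by (simp add: Th0 mult.commute)
qed

lemma ww_cont: assumes "eps < 1" shows "continuous_on {0..S} (\<lambda>s. ww s $ i)"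
proof -
  have L: "0 < Lg" using Lg_pos assms by simp
  have c1: "continuous_on {0..S} (\<lambda>s. s * Lg)" by (intro continuous_intros)
  have im: "(\<lambda>s. s * Lg) ` {0..S} \<subseteq> {0..S * Lg}" using L by (auto intro: mult_right_mono)
  have "continuous_on {0..S} ((\<lambda>t. (M *v G t) $ i) \<circ> (\<lambda>s. s * Lg))"
    by (rule continuous_on_compose[OF c1 continuous_on_subset[OF MG_cont im]])
  then have cF: "continuous_on {0..S} (\<lambda>s. (M *v G (s * Lg)) $ i)" by (simp add: o_def)
  define F where "F = (\<lambda>s. (M *v G (s * Lg)) $ i)"
  have cF': "continuous_on {0..S} F" using cF by (simp add: F_def)
  have eq: "(\<lambda>s. ww s $ i) = (\<lambda>s. s * r $ i - k $ i - F s / Lg)"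
    by (simp add: ww_def MTh F_def fun_eq_iff)
  have "continuous_on {0..S} (\<lambda>s. s * r $ i - k $ i - F s / Lg)"
    using L by (intro continuous_intros cF') auto
  then show ?thesis by (simp only: eq)
qed

lemma ww_nth: "ww s $ i = s * r $ i - k $ i - (\<Sum>j\<in>UNIV. M $ i $ j * Th s $ j)"
  by (simp add: ww_def mv_nth)

lemma h_mono: assumes "eps < 1" "0 \<le> s'" "s' \<le> s"
  shows "ww s' $ i + M $ i $ i * Th s' $ i \<le> ww s $ i + M $ i $ i * Th s $ i"
proof -
  have "(\<Sum>j\<in>UNIV. M $ i $ j * (Th s $ j - Th s' $ j)) \<le> (\<Sum>j\<in>UNIV. if j = i then M $ i $ i * (Th s $ i - Th s' $ i) else 0)"
  proof (intro sum_mono)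
    fix j show "M $ i $ j * (Th s $ j - Th s' $ j) \<le> (if j = i then M $ i $ i * (Th s $ i - Th s' $ i) else 0)"
    proof (cases "j = i")
      case False
      then have "M $ i $ j \<le> 0" using offdiag by auto
      moreover have "0 \<le> Th s $ j - Th s' $ j" using Th_mono[OF assms(1,2,3)] by simp
      ultimately show ?thesis using False by (simp add: mult_nonpos_nonneg)
    qed simp
  qed
  then have "(\<Sum>j\<in>UNIV. M $ i $ j * Th s $ j) - (\<Sum>j\<in>UNIV. M $ i $ j * Th s' $ j) \<le> M $ i $ i * (Th s $ i - Th s' $ i)"
    by (simp add: right_diff_distrib sum_subtractf)
  moreover have "s' * r $ i \<le> s * r $ i" using assms r_pos by (simp add: less_imp_le mult_right_mono)
  ultimately show ?thesis unfolding ww_nth by (simp add: algebra_simps)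
qed

lemma approx_kkt:
  assumes "eps < 1" "0 < s" "s \<le> S" "0 < rho"
    and small: "M $ i $ i * (S * C $ i * exp (- (Lg * rho / 2))) < rho / 2"
    and wlow: "ww s $ i < - rho"
  shows "Th s $ i \<le> S * C $ i * exp (- (Lg * rho / 2))"
proof -
  define m where "m = C $ i * exp (- (Lg * rho / 2))"
  have L: "0 < Lg" using Lg_pos assms by simp
  have thb: "th (x * Lg) $ i \<le> m" if "0 \<le> x" "ww x $ i < - rho / 2" for x
  proof -
    have "Lg * ww x $ i \<le> Lg * (- (rho / 2))" using that L by (intro mult_left_mono) auto
    then have "Lg * ww x $ i \<le> - (Lg * rho / 2)" by simp
    then show ?thesis using th_scaled[OF assms(1) that(1), of i] C_pos by (simp add: m_def)
  qed
  define P where "P = {0..s} \<inter> (\<lambda>x. ww x $ i) -` {- rho / 2..}"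
  show ?thesis
  proof (cases "P = {}")
    case True
    have "Th s $ i - Th 0 $ i \<le> m * (s - 0)"
    proof (rule Th_lip[OF assms(1)])
      fix x assume "0 < x" "x < s"
      have "x \<notin> P" using True by simp
      then have "\<not> (- rho / 2 \<le> ww x $ i)" using \<open>0 < x\<close> \<open>x < s\<close> by (simp add: P_def)
      then have "ww x $ i < - rho / 2" by simp
      then show "th (x * Lg) $ i \<le> m" using thb \<open>0 < x\<close> by simp
    qed (use assms in auto)
    moreover have "m * s \<le> m * S" using assms C_pos by (intro mult_left_mono) (auto simp: m_def less_imp_le)
    ultimately show ?thesis by (simp add: Th0 m_def mult_ac)
  next
    case False
    have "closed P" unfolding P_def
      by (intro continuous_closed_preimage ww_cont assms) auto
    moreover have "bdd_above P" unfolding P_def by (auto intro: bdd_aboveI[of _ s])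
    ultimately have inP: "Sup P \<in> P" using closed_contains_Sup False by blast
    define s0 where "s0 = Sup P"
    have s0: "0 \<le> s0" "s0 \<le> s" "ww s0 $ i \<ge> - rho / 2" using inP by (auto simp: P_def s0_def)
    have "Th s $ i - Th s0 $ i \<le> m * (s - s0)"
    proof (rule Th_lip[OF assms(1) s0(1,2)])
      fix x assume "s0 < x" "x < s"
      have "x \<notin> P"
      proof
        assume "x \<in> P"
        then have "x \<le> Sup P" using cSup_upper \<open>bdd_above P\<close> by blast
        then show False using \<open>s0 < x\<close> by (simp add: s0_def)
      qed
      then have "ww x $ i < - rho / 2" using \<open>s0 < x\<close> \<open>x < s\<close> s0 by (auto simp: P_def not_le)
      then show "th (x * Lg) $ i \<le> m" using thb \<open>s0 < x\<close> s0 by simp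
    qed
    also have "m * (s - s0) \<le> m * S" using assms C_pos s0 by (intro mult_left_mono) (auto simp: m_def less_imp_le)
    finally have "M $ i $ i * (Th s $ i - Th s0 $ i) \<le> M $ i $ i * (m * S)"
      using Mii_pos by (intro mult_left_mono) (auto simp: less_imp_le)
    moreover have "ww s0 $ i + M $ i $ i * Th s0 $ i \<le> ww s $ i + M $ i $ i * Th s $ i"
      by (rule h_mono[OF assms(1) s0(1,2)])
    ultimately have False using small wlow s0(3) by (simp add: m_def algebra_simps)
    then show ?thesis ..
  qed
qed


lemma ww_abs: assumes "eps < 1" "0 < s" "s \<le> S" shows "\<bar>ww s $ i\<bar> \<le> S * r $ i + k $ i + (\<Sum>j\<in>UNIV. \<bar>M $ i $ j\<bar> * (S * Bn))"
proof -
  have "\<bar>\<Sum>j\<in>UNIV. M $ i $ j * Th s $ j\<bar> \<le> (\<Sum>j\<in>UNIV. \<bar>M $ i $ j * Th s $ j\<bar>)" by (rule sum_abs)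
  also have "\<dots> \<le> (\<Sum>j\<in>UNIV. \<bar>M $ i $ j\<bar> * (S * Bn))"
  proof (intro sum_mono)
    fix j
    have sb: "s * Bn \<le> S * Bn" using assms Bn_ge1 by (intro mult_right_mono) auto
    have "0 \<le> Th s $ j" "Th s $ j \<le> S * Bn"
      using Th_nonneg[of s j] Th_le[of s j] assms sb by auto
    then show "\<bar>M $ i $ j * Th s $ j\<bar> \<le> \<bar>M $ i $ j\<bar> * (S * Bn)" by (simp add: abs_mult mult_left_mono)
  qed
  finally have a: "\<bar>\<Sum>j\<in>UNIV. M $ i $ j * Th s $ j\<bar> \<le> (\<Sum>j\<in>UNIV. \<bar>M $ i $ j\<bar> * (S * Bn))" .
  have "s * r $ i \<le> S * r $ i" using assms r_pos by (simp add: mult_right_mono less_imp_le)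
  moreover have "0 \<le> s * r $ i" using assms r_pos by (simp add: less_imp_le)
  ultimately show ?thesis unfolding ww_nth using a k_pos[rule_format, of i] by linarith
qed

lemma core_est:
  assumes "eps < 1" "0 < s" "s \<le> S" "0 < rho"
    and small: "\<forall>i. M $ i $ i * (S * C $ i * exp (- (Lg * rho / 2))) < rho / 2"
  shows "lam * (norm (Th s - Phi s))^2 \<le>
     (\<Sum>i\<in>UNIV. S * Bn * rho + S * C $ i * exp (- (Lg * rho / 2)) * (S * r $ i + k $ i + (\<Sum>j\<in>UNIV. \<bar>M $ i $ j\<bar> * (S * Bn))))
     + (\<Sum>i\<in>UNIV. S * mu X y k S $ i * \<bar>ln (Bn / C $ i)\<bar>) / Lg"
proof -
  have L: "0 < Lg" using Lg_pos assms by simp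
  have thn: "\<forall>i. 0 \<le> Th s $ i" using Th_nonneg assms by simp
  have st: "inner (Th s - Phi s) (M *v (Th s - Phi s)) \<le> - inner (Th s) (ww s) + inner (Phi s) (ww s)"
    using stability[OF assms(2) thn] by (simp add: ww_def)
  define tau where "tau i = S * C $ i * exp (- (Lg * rho / 2))" for i
  define Wm where "Wm i = S * r $ i + k $ i + (\<Sum>j\<in>UNIV. \<bar>M $ i $ j\<bar> * (S * Bn))" for i
  have t1: "- inner (Th s) (ww s) \<le> (\<Sum>i\<in>UNIV. S * Bn * rho + tau i * Wm i)"
    unfolding inner_vec_def inner_real_def sum_negf[symmetric]
  proof (intro sum_mono)
    fix i
    have Wm0: "0 \<le> Wm i" unfolding Wm_def using ww_abs[OF assms(1-3), of i] by linarith
    have tau0: "0 \<le> tau i" unfolding tau_def using C_pos assms by (simp add: less_imp_le)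
    have sb: "s * Bn \<le> S * Bn" using assms Bn_ge1 by (intro mult_right_mono) auto
    have Th_i: "0 \<le> Th s $ i" "Th s $ i \<le> S * Bn"
      using thn Th_le[of s i] assms sb by auto
    show "- (Th s $ i * ww s $ i) \<le> S * Bn * rho + tau i * Wm i"
    proof (cases "ww s $ i < - rho")
      case True
      have "Th s $ i \<le> tau i" unfolding tau_def
        by (rule approx_kkt[OF assms(1-4)]) (use small True in auto)
      moreover have "- ww s $ i \<le> Wm i" using ww_abs[OF assms(1-3), of i] by (simp add: Wm_def)
      ultimately have "Th s $ i * (- ww s $ i) \<le> tau i * Wm i"
        using Th_i True assms by (intro mult_mono) auto
      moreover have "0 \<le> S * Bn * rho" using assms Bn_ge1 by simp
      ultimately show ?thesis by simp
    next
      case False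
      then have "Th s $ i * (- ww s $ i) \<le> Th s $ i * rho"
        using Th_i by (intro mult_left_mono) auto
      also have "\<dots> \<le> (S * Bn) * rho" using Th_i assms by (intro mult_right_mono) auto
      finally have "Th s $ i * (- ww s $ i) \<le> (S * Bn) * rho" .
      moreover have "0 \<le> tau i * Wm i" using Wm0 tau0 by simp
      ultimately show ?thesis by simp
    qed
  qed
  have t2: "inner (Phi s) (ww s) \<le> (\<Sum>i\<in>UNIV. S * mu X y k S $ i * \<bar>ln (Bn / C $ i)\<bar>) / Lg"
    unfolding inner_vec_def inner_real_def sum_divide_distrib
  proof (intro sum_mono)
    fix i
    have p0: "0 \<le> Phi s $ i" using Phi_nonneg assms by simp
    have "Phi s $ i \<le> S * mu X y k S $ i" unfolding Phi_def
      using mu_mono[of s S i] mu_nonneg[of s i] assms by (simp add: mult_mono)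
    have "Phi s $ i * ww s $ i \<le> Phi s $ i * (ln (Bn / C $ i) / Lg)"
      using ww_upper[of s i] assms p0 by (intro mult_left_mono) auto
    also have "\<dots> \<le> Phi s $ i * (\<bar>ln (Bn / C $ i)\<bar> / Lg)"
      using p0 L by (intro mult_left_mono divide_right_mono) auto
    also have "\<dots> \<le> (S * mu X y k S $ i) * (\<bar>ln (Bn / C $ i)\<bar> / Lg)"
      using \<open>Phi s $ i \<le> S * mu X y k S $ i\<close> L by (intro mult_right_mono) auto
    finally show "Phi s $ i * ww s $ i \<le> S * mu X y k S $ i * \<bar>ln (Bn / C $ i)\<bar> / Lg" by simp
  qed
  have "lam * (norm (Th s - Phi s))^2 \<le> inner (Th s - Phi s) (M *v (Th s - Phi s))" by (rule lam)
  then show ?thesis using st t1 t2 unfolding tau_def Wm_def by linarith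
qed

end


lemma Th_conv: assumes "0 < S" "0 < e"
  shows "eventually (\<lambda>eps. \<forall>s\<in>{0<..S}. norm (Th eps s - Phi s) < e) (at_right 0)"
proof -
  define d where "d = real CARD('d)"
  define rho where "rho = lam * e^2 / (4 * (d * S * Bn + 1))"
  have d0: "0 \<le> d" by (simp add: d_def)
  have dSB: "0 \<le> d * S * Bn" using d0 assms Bn_ge1 by simp
  have rho: "0 < rho" unfolding rho_def using lam(1) assms dSB by (intro divide_pos_pos) auto
  have rho_bound: "d * S * Bn * rho \<le> lam * e^2 / 4"
  proof -
    have "d * S * Bn * rho = lam * e^2 / 4 * ((d * S * Bn) / (d * S * Bn + 1))"
      unfolding rho_def using dSB by (simp add: field_simps)
    also have "\<dots> \<le> lam * e^2 / 4 * 1"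
      using dSB lam(1) by (intro mult_left_mono) auto
    finally show ?thesis by simp
  qed
  define Wm where "Wm i = S * r $ i + k $ i + (\<Sum>j\<in>UNIV. \<bar>M $ i $ j\<bar> * (S * Bn))" for i
  define K0 where "K0 = (\<Sum>i\<in>UNIV. S * mu X y k S $ i * \<bar>ln (Bn / C $ i)\<bar>)"
  define R where "R eps = (\<Sum>i\<in>UNIV. S * Bn * rho + S * C $ i * exp (- (ln (1/eps) * (rho / 2))) * Wm i) + K0 * (1 / ln (1/eps))" for eps
  have E: "((\<lambda>eps. exp (- (ln (1/eps) * (rho / 2)))) \<longlongrightarrow> 0) (at_right 0)"
    by (rule exp_ln_lim) (use rho in simp)
  have "(R \<longlongrightarrow> (\<Sum>i\<in>UNIV. S * Bn * rho + S * C $ i * 0 * Wm i) + K0 * 0) (at_right 0)"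
    unfolding R_def[abs_def] by (intro tendsto_intros E inv_ln_lim)
  moreover have "(\<Sum>i\<in>UNIV. S * Bn * rho + S * C $ i * 0 * Wm i) + K0 * 0 = d * S * Bn * rho"
    by (simp add: d_def mult_ac)
  ultimately have "(R \<longlongrightarrow> d * S * Bn * rho) (at_right 0)" by (simp add: d_def mult_ac)
  moreover have "d * S * Bn * rho < lam * e^2"
  proof -
    have "0 < lam * e^2" using lam(1) assms by simp
    then show ?thesis using rho_bound by linarith
  qed
  ultimately have ev1: "eventually (\<lambda>eps. R eps < lam * e^2) (at_right 0)"
    by (rule order_tendstoD)
  have ev2: "eventually (\<lambda>eps. \<forall>i. M $ i $ i * (S * C $ i * exp (- (ln (1/eps) * (rho / 2)))) < rho / 2) (at_right 0)"
  proof (rule eventually_all_finite)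
    fix i
    have "((\<lambda>eps. M $ i $ i * (S * C $ i * exp (- (ln (1/eps) * (rho / 2))))) \<longlongrightarrow> M $ i $ i * (S * C $ i * 0)) (at_right 0)"
      by (intro tendsto_intros E)
    then show "eventually (\<lambda>eps. M $ i $ i * (S * C $ i * exp (- (ln (1/eps) * (rho / 2)))) < rho / 2) (at_right 0)"
      using rho by (intro order_tendstoD) auto
  qed
  show ?thesis
    using ev1 ev2 ev_pos_right
  proof eventually_elim
    case (elim eps)
    then have eps: "0 < eps" "eps < 1" by auto
    show ?case
    proof
      fix s assume s: "s \<in> {0<..S}"
      have "lam * (norm (Th eps s - Phi s))^2 \<le> R eps"
        using core_est[OF eps(1) eps(2), of s S rho] s rho elim
        by (simp add: R_def Wm_def K0_def Lg_def mult_ac)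
      then have "lam * (norm (Th eps s - Phi s))^2 < lam * e^2" using elim by simp
      then have "(norm (Th eps s - Phi s))^2 < e^2" using lam(1) by simp
      then show "norm (Th eps s - Phi s) < e" using assms by (simp add: power_less_imp_less_base)
    qed
  qed
qed


lemma avg_eq: assumes "0 < eps" "eps < 1" "0 < s"
  shows "(1 / (s * ln (1/eps))) *\<^sub>R integral {0..s * ln (1/eps)} (sol eps) = (1/s) *\<^sub>R Th eps s"
  using assms by (simp add: Th_def G_def Lg_def)

lemma mu_Phi: "0 < s \<Longrightarrow> mu X y k s = (1/s) *\<^sub>R Phi s"
  by (simp add: Phi_def)

lemma part3_unif: assumes "compact K" "K \<subseteq> {0<..}"
  shows "uniform_limit K (\<lambda>\<epsilon> s. (1 / (s * ln (1/\<epsilon>))) *\<^sub>R integral {0..s * ln (1/\<epsilon>)} (sol \<epsilon>))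
          (mu X y k) (at_right 0)"
proof (cases "K = {}")
  case True then show ?thesis by simp
next
  case False
  obtain a where a: "a \<in> K" "\<forall>t\<in>K. a \<le> t"
    using compact_attains_inf[OF assms(1) False] by blast
  obtain S where S: "S \<in> K" "\<forall>t\<in>K. t \<le> S"
    using compact_attains_sup[OF assms(1) False] by blast
  have a0: "0 < a" using a assms by auto
  have S0: "0 < S" using S assms by auto
  show ?thesis
  proof (rule uniform_limitI)
    fix e :: real assume e: "0 < e"
    have "eventually (\<lambda>eps. \<forall>s\<in>{0<..S}. norm (Th eps s - Phi s) < e * a) (at_right 0)"
      using Th_conv[OF S0] e a0 by simp
    then show "eventually (\<lambda>eps. \<forall>s\<in>K. dist ((1 / (s * ln (1/eps))) *\<^sub>R integral {0..s * ln (1/eps)} (sol eps)) (mu X y k s) < e) (at_right 0)"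
      using ev_pos_right
    proof eventually_elim
      case (elim eps)
      show ?case
      proof
        fix s assume s: "s \<in> K"
        then have s0: "0 < s" "s \<le> S" "a \<le> s" using assms S a by auto
        have "dist ((1 / (s * ln (1/eps))) *\<^sub>R integral {0..s * ln (1/eps)} (sol eps)) (mu X y k s)
            = norm ((1/s) *\<^sub>R (Th eps s - Phi s))"
          using elim s0 by (simp add: avg_eq mu_Phi dist_norm scaleR_diff_right)
        also have "\<dots> = norm (Th eps s - Phi s) / s" using s0 by simp
        also have "\<dots> < e * a / s" using elim s0 by (intro divide_strict_right_mono) auto
        also have "\<dots> \<le> e" using s0 e a0 by (simp add: field_simps mult_left_mono)
        finally show "dist ((1 / (s * ln (1/eps))) *\<^sub>R integral {0..s * ln (1/eps)} (sol eps)) (mu X y k s) < e" .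
      qed
    qed
  qed
qed


definition Mn :: real where "Mn = (\<Sum>i\<in>UNIV. \<Sum>j\<in>UNIV. \<bar>M $ i $ j\<bar>)"

lemma Mn_nonneg: "0 \<le> Mn"
  unfolding Mn_def by (intro sum_nonneg) auto

lemma row_le_Mn: "(\<Sum>j\<in>UNIV. \<bar>M $ i $ j\<bar>) \<le> Mn"
  unfolding Mn_def by (rule member_le_sum) (auto intro: sum_nonneg)

lemma Mv_abs: "\<bar>(M *v v) $ i\<bar> \<le> Mn * norm v"
proof -
  have "\<bar>(M *v v) $ i\<bar> \<le> (\<Sum>j\<in>UNIV. \<bar>M $ i $ j * v $ j\<bar>)" unfolding mv_nth by (rule sum_abs)
  also have "\<dots> \<le> (\<Sum>j\<in>UNIV. \<bar>M $ i $ j\<bar> * norm v)"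
    by (intro sum_mono) (simp add: abs_mult mult_left_mono component_le_norm_cart)
  also have "\<dots> \<le> Mn * norm v" using row_le_Mn[of i] by (simp add: sum_distrib_right[symmetric] mult_right_mono)
  finally show ?thesis .
qed

lemma quad_le_Mn: "inner v (M *v v) \<le> Mn * (norm v)^2"
proof -
  have "inner v (M *v v) \<le> (\<Sum>i\<in>UNIV. \<Sum>j\<in>UNIV. \<bar>M $ i $ j\<bar> * \<bar>v $ i\<bar> * \<bar>v $ j\<bar>)" by (rule quad_le_abs)
  also have "\<dots> \<le> (\<Sum>i\<in>UNIV. \<Sum>j\<in>UNIV. \<bar>M $ i $ j\<bar> * (norm v)^2)"
  proof (intro sum_mono)
    fix i j
    have "\<bar>v $ i\<bar> * \<bar>v $ j\<bar> \<le> norm v * norm v"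
      by (intro mult_mono component_le_norm_cart) auto
    then show "\<bar>M $ i $ j\<bar> * \<bar>v $ i\<bar> * \<bar>v $ j\<bar> \<le> \<bar>M $ i $ j\<bar> * (norm v)^2"
      by (simp add: power2_eq_square mult.assoc mult_left_mono)
  qed
  also have "\<dots> = Mn * (norm v)^2" by (simp add: Mn_def sum_distrib_right)
  finally show ?thesis .
qed

lemma ww_conv: assumes "0 < S" "0 < e"
  shows "eventually (\<lambda>eps. \<forall>s\<in>{0<..S}. \<forall>i. \<bar>ww eps s $ i - wPhi s $ i\<bar> < e) (at_right 0)"
proof -
  have "eventually (\<lambda>eps. \<forall>s\<in>{0<..S}. norm (Th eps s - Phi s) < e / (Mn + 1)) (at_right 0)"
    using Th_conv[OF assms(1)] assms Mn_nonneg by simp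
  then show ?thesis using ev_pos_right
  proof eventually_elim
    case (elim eps)
    then have eps0: "0 < eps" by simp
    show ?case
    proof (intro ballI allI)
      fix s i assume s: "s \<in> {0<..S}"
      have "ww eps s - wPhi s = M *v (Phi s - Th eps s)"
        using eps0 by (simp add: ww_def wPhi_def matrix_vector_mult_diff_distrib)
      then have "(ww eps s - wPhi s) $ i = (M *v (Phi s - Th eps s)) $ i" by (simp only:)
      then have "ww eps s $ i - wPhi s $ i = (M *v (Phi s - Th eps s)) $ i" by simp
      then have "\<bar>ww eps s $ i - wPhi s $ i\<bar> \<le> Mn * norm (Phi s - Th eps s)"
        using Mv_abs[of "Phi s - Th eps s" i] by simp
      also have "\<dots> \<le> Mn * (e / (Mn + 1))"
        using elim s Mn_nonneg by (intro mult_left_mono) (auto simp: norm_minus_commute less_imp_le)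
      also have "\<dots> < e" using Mn_nonneg assms by (simp add: field_simps)
      finally show "\<bar>ww eps s $ i - wPhi s $ i\<bar> < e" .
    qed
  qed
qed

lemma offdiag_sum: assumes "\<forall>l. 0 \<le> D $ l" shows "(M *v D) $ j \<le> M $ j $ j * D $ j"
proof -
  have "(M *v D) $ j \<le> (\<Sum>l\<in>UNIV. if l = j then M $ j $ j * D $ j else 0)"
    unfolding mv_nth
  proof (intro sum_mono)
    fix l show "M $ j $ l * D $ l \<le> (if l = j then M $ j $ j * D $ j else 0)"
    proof (cases "l = j")
      case False
      then have "M $ j $ l \<le> 0" using offdiag by auto
      then show ?thesis using False assms by (simp add: mult_nonpos_nonneg)
    qed simp
  qed
  then show ?thesis by simp
qed

lemma wPhi_mono_off: assumes "0 < s" "s \<le> s'" "Phi s $ j = Phi s' $ j"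
  shows "(s' - s) * r $ j \<le> wPhi s' $ j - wPhi s $ j"
proof -
  have D: "\<forall>l. 0 \<le> (Phi s' - Phi s) $ l" using Phi_mono assms by simp
  have "(M *v (Phi s' - Phi s)) $ j \<le> 0" using offdiag_sum[OF D, of j] assms(3) by simp
  then show ?thesis by (simp add: wPhi_def matrix_vector_mult_diff_distrib algebra_simps)
qed

lemma window_facts:
  assumes d0: "0 < dl"
    and R: "\<forall>s. s0 - 3*dl \<le> s \<and> s \<le> s0 + 2*dl \<longrightarrow> 0 < s \<and> supp_mu X y k s = A"
  obtains ts c where "theta_star X y A = ts" "\<forall>i. 0 \<le> ts $ i" "\<forall>i. i \<notin> A \<longrightarrow> ts $ i = 0"
    "\<forall>i\<in>A. (r - M *v ts) $ i = 0" "0 < c"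
    "\<forall>s j. s0 - 3*dl \<le> s \<longrightarrow> s \<le> s0 + dl \<longrightarrow> j \<notin> A \<longrightarrow> wPhi s $ j \<le> - c"
    "\<forall>s i. s0 - 3*dl \<le> s \<longrightarrow> s \<le> s0 + 2*dl \<longrightarrow> i \<in> A \<longrightarrow> wPhi s $ i = 0"
proof -
  have Rs: "0 < s" "supp_mu X y k s = A" if "s0 - 3*dl \<le> s" "s \<le> s0 + 2*dl" for s using R that by auto
  have Phi0: "Phi s $ j = 0" if "s0 - 3*dl \<le> s" "s \<le> s0 + 2*dl" "j \<notin> A" for s j
  proof -
    have "\<not> 0 < mu X y k s $ j" using Rs[OF that(1,2)] that(3) by (auto simp: supp_mu_def)
    then have "mu X y k s $ j = 0" using mu_nonneg[of s j] Rs[OF that(1,2)] by simp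
    then show ?thesis by (simp add: Phi_def)
  qed
  have wz: "wPhi s $ i = 0" if "s0 - 3*dl \<le> s" "s \<le> s0 + 2*dl" "i \<in> A" for s i
    using Rs[OF that(1,2)] that(3) by (intro wPhi_zero) (auto simp: supp_mu_def)
  have MPhi: "(M *v Phi s) $ i = s * r $ i - k $ i - wPhi s $ i" for s i
    by (simp add: wPhi_def)
  define ts where "ts = (1/dl) *\<^sub>R (Phi (s0 + dl) - Phi s0)"
  have i1: "s0 - 3*dl \<le> s0 + dl" "s0 + dl \<le> s0 + 2*dl" "s0 - 3*dl \<le> s0" "s0 \<le> s0 + 2*dl"
    using d0 by auto
  have ts_off: "\<forall>i. i \<notin> A \<longrightarrow> ts $ i = 0" using Phi0 i1 by (simp add: ts_def)
  have ts_nn: "\<forall>i. 0 \<le> ts $ i" using Phi_mono[of s0 "s0 + dl"] Rs[OF i1(3,4)] d0 by (simp add: ts_def)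
  have ts_on: "\<forall>i\<in>A. (M *v ts) $ i = r $ i"
  proof
    fix i assume "i \<in> A"
    have "(M *v ts) $ i = ((M *v Phi (s0 + dl)) $ i - (M *v Phi s0) $ i) / dl"
      by (simp add: ts_def matrix_vector_mult_scaleR matrix_vector_mult_diff_distrib divide_inverse mult.commute)
    also have "\<dots> = r $ i" using wz[OF i1(1,2) \<open>i \<in> A\<close>] wz[OF i1(3,4) \<open>i \<in> A\<close>] d0
      unfolding MPhi by (simp add: field_simps)
    finally show "(M *v ts) $ i = r $ i" .
  qed
  have tstar: "theta_star X y A = ts"
    unfolding theta_star_def
  proof (rule the_equality)
    show "(\<forall>i. i \<notin> A \<longrightarrow> ts $ i = 0) \<and> (\<forall>i\<in>A. (gram X *v ts) $ i = corr X y $ i)"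
      using ts_off ts_on by blast
    fix v assume v: "(\<forall>i. i \<notin> A \<longrightarrow> v $ i = 0) \<and> (\<forall>i\<in>A. (gram X *v v) $ i = corr X y $ i)"
    define u where "u = v - ts"
    have "inner u (M *v u) = 0" unfolding inner_vec_def inner_real_def
    proof (intro sum.neutral ballI)
      fix i
      show "u $ i * (M *v u) $ i = 0"
      proof (cases "i \<in> A")
        case True
        then have "(M *v u) $ i = 0" using v ts_on by (simp add: u_def matrix_vector_mult_diff_distrib)
        then show ?thesis by simp
      next
        case False then show ?thesis using v ts_off by (simp add: u_def)
      qed
    qed
    have "u = 0"
    proof (rule ccontr)
      assume "u \<noteq> 0"
      then have "0 < inner u (M *v u)" by (rule quad_pos)
      then show False using \<open>inner u (M *v u) = 0\<close> by simp
    qed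
    then show "v = ts" by (simp add: u_def)
  qed
  have neg: "wPhi (s0 + dl) $ j < 0" if "j \<notin> A" for j
  proof -
    have "dl * r $ j \<le> wPhi (s0 + 2*dl) $ j - wPhi (s0 + dl) $ j"
      using wPhi_mono_off[of "s0 + dl" "s0 + 2*dl" j] Rs[OF i1(1,2)] Phi0[OF i1(1,2) that] Phi0[of "s0 + 2*dl" j] that d0
      by simp
    moreover have "0 < dl * r $ j" using d0 r_pos by simp
    moreover have "wPhi (s0 + 2*dl) $ j \<le> 0" using wPhi_nonpos Rs[of "s0 + 2*dl"] d0 by simp
    ultimately show ?thesis by linarith
  qed
  define c where "c = Min (insert 1 ((\<lambda>j. - wPhi (s0 + dl) $ j) ` (- A)))"
  have c0: "0 < c" unfolding c_def using neg by (subst Min_gr_iff) auto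
  have cle: "c \<le> - wPhi (s0 + dl) $ j" if "j \<notin> A" for j
    unfolding c_def using that by (intro Min_le) auto
  have off: "\<forall>s j. s0 - 3*dl \<le> s \<longrightarrow> s \<le> s0 + dl \<longrightarrow> j \<notin> A \<longrightarrow> wPhi s $ j \<le> - c"
  proof (intro allI impI)
    fix s j assume s: "s0 - 3*dl \<le> s" "s \<le> s0 + dl" and j: "j \<notin> A"
    have "(s0 + dl - s) * r $ j \<le> wPhi (s0 + dl) $ j - wPhi s $ j"
      using wPhi_mono_off[of s "s0 + dl" j] Rs[of s] s Phi0[of s j] Phi0[OF i1(1,2) j] j d0 by simp
    moreover have "0 \<le> (s0 + dl - s) * r $ j" using s r_pos by (simp add: less_imp_le)
    ultimately show "wPhi s $ j \<le> - c" using cle[OF j] by linarith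
  qed
  have on: "\<forall>s i. s0 - 3*dl \<le> s \<longrightarrow> s \<le> s0 + 2*dl \<longrightarrow> i \<in> A \<longrightarrow> wPhi s $ i = 0"
    using wz by blast
  show ?thesis
    by (rule that[OF tstar ts_nn ts_off _ c0 off on]) (use ts_on in simp)
qed


lemma fobj_shift: assumes "inner ts (r - M *v ts) = 0"
  shows "fobj X y v = fobj X y ts + 1/2 * inner (v - ts) (M *v (v - ts)) - inner (r - M *v ts) v"
proof -
  have "inner (v - ts) (M *v (v - ts)) = inner v (M *v v) - 2 * inner v (M *v ts) + inner ts (M *v ts)"
    by (rule quad_diff)
  moreover have "inner ts r = inner ts (M *v ts)" using assms by (simp add: inner_diff_right)
  ultimately show ?thesis
    by (simp add: fobj_def inner_diff_left inner_diff_right inner_commute[of r] inner_commute[of "M *v ts" v] algebra_simps)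
qed

lemma ln_th_scaled: assumes "0 < eps" "eps < 1" "0 \<le> s"
  shows "ln (sol eps (s * Lg eps) $ i) = ln (C $ i) + Lg eps * ww eps s $ i"
proof -
  have "0 < C $ i" using C_pos by simp
  then show ?thesis using th_scaled[OF assms, of i] by (simp add: ln_mult)
qed

lemma local_core:
  assumes eps: "0 < eps" "eps < 1"
    and dl: "0 < dl" and s: "0 < s - dl"
    and ts: "\<forall>i. 0 \<le> ts $ i" "\<forall>i. i \<notin> A \<longrightarrow> ts $ i = 0" "\<forall>i\<in>A. (r - M *v ts) $ i = 0"
    and wA: "\<forall>\<sigma> i. s - dl \<le> \<sigma> \<longrightarrow> \<sigma> \<le> s \<longrightarrow> i \<in> A \<longrightarrow> - rho < ww eps \<sigma> $ i"
    and wN: "\<forall>\<sigma> j. s - dl \<le> \<sigma> \<longrightarrow> \<sigma> \<le> s \<longrightarrow> j \<notin> A \<longrightarrow> ww eps \<sigma> $ j < - c/2"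
    and g2: "0 < g2"
    and rho: "0 < rho" "rho * (\<Sum>i\<in>UNIV. ts $ i) \<le> dl * lam * g2 / 4"
    and tau: "(\<Sum>j\<in>UNIV. \<bar>(r - M *v ts) $ j\<bar> * C $ j * exp (- (Lg eps * (c/2)))) \<le> lam * g2 / 2"
    and LK: "real CARD('d) * Bn + (\<Sum>i\<in>UNIV. ts $ i * \<bar>ln (Bn / C $ i)\<bar>) < lam * g2 * dl / 4 * Lg eps"
  shows "lam * (norm (sol eps (s * Lg eps) - ts))^2 \<le> Mn * g2 + 4 * (\<Sum>j\<in>UNIV. \<bar>(r - M *v ts) $ j\<bar> * C $ j * exp (- (Lg eps * (c/2))))"
proof -
  define L where "L = Lg eps"
  have L0: "0 < L" using Lg_pos[OF eps] by (simp add: L_def)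
  define er where "er = r - M *v ts"
  define tau where "tau = (\<Sum>j\<in>UNIV. \<bar>er $ j\<bar> * C $ j * exp (- (L * (c/2))))"
  define t1 where "t1 = (s - dl) * L"
  define t2 where "t2 = s * L"
  have t1p: "0 < t1" using s L0 by (simp add: t1_def)
  have t12: "t1 \<le> t2" using dl L0 by (simp add: t1_def t2_def mult_right_mono)
  have tau0: "0 \<le> tau" unfolding tau_def using C_pos by (intro sum_nonneg) (simp add: less_imp_le)
  have tsr0: "ts $ i * er $ i = 0" for i
  proof (cases "i \<in> A")
    case True then have "er $ i = 0" using ts(3) by (simp add: er_def)
    then show ?thesis by simp
  next
    case False then have "ts $ i = 0" using ts(2) by simp
    then show ?thesis by simp
  qed
  have tsr: "inner ts er = 0" unfolding inner_vec_def inner_real_def by (intro sum.neutral ballI) (rule tsr0)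
  have bnd_e: "\<bar>inner (sol eps t) er\<bar> \<le> tau" if "t1 \<le> t" "t \<le> t2" for t
  proof -
    define sg where "sg = t / L"
    have "s - dl \<le> sg" using that(1) L0 by (simp add: sg_def t1_def le_divide_eq)
    moreover have "sg \<le> s" using that(2) L0 by (simp add: sg_def t2_def divide_le_eq)
    moreover have "0 \<le> sg" using that t1p L0 by (simp add: sg_def)
    ultimately have sg: "s - dl \<le> sg" "sg \<le> s" "0 \<le> sg" by auto
    have tsg: "t = sg * L" using L0 by (simp add: sg_def)
    have "\<bar>inner (sol eps t) er\<bar> \<le> (\<Sum>j\<in>UNIV. \<bar>sol eps t $ j * er $ j\<bar>)"
      unfolding inner_vec_def inner_real_def by (rule sum_abs)
    also have "\<dots> \<le> tau" unfolding tau_def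
    proof (intro sum_mono)
      fix j
      show "\<bar>sol eps t $ j * er $ j\<bar> \<le> \<bar>er $ j\<bar> * C $ j * exp (- (L * (c/2)))"
      proof (cases "j \<in> A")
        case True then have "er $ j = 0" using ts by (simp add: er_def)
        then show ?thesis by simp
      next
        case False
        then have "ww eps sg $ j < - c/2" using wN sg by blast
        then have "L * ww eps sg $ j \<le> L * (- (c/2))" using L0 by (intro mult_left_mono) auto
        then have "L * ww eps sg $ j \<le> - (L * (c/2))" by simp
        then have "sol eps t $ j \<le> C $ j * exp (- (L * (c/2)))"
          using th_scaled[OF eps sg(3), of j] C_pos tsg by (simp add: L_def)
        moreover have "0 < sol eps t $ j" using th_pos[OF eps(1)] t1p that by simp
        ultimately have a: "\<bar>sol eps t $ j * er $ j\<bar> = \<bar>er $ j\<bar> * sol eps t $ j"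
          and b: "\<bar>er $ j\<bar> * sol eps t $ j \<le> \<bar>er $ j\<bar> * (C $ j * exp (- (L * (c/2))))"
          by (auto simp: abs_mult mult.commute intro: mult_left_mono)
        show ?thesis using a b by (simp add: mult_ac)
      qed
    qed
    finally show ?thesis .
  qed
  have "\<exists>t0. t1 \<le> t0 \<and> t0 \<le> t2 \<and> (norm (sol eps t0 - ts))^2 < g2"
  proof (rule ccontr)
    assume nex: "\<not> ?thesis"
    have far: "g2 \<le> (norm (sol eps t - ts))^2" if "t1 \<le> t" "t \<le> t2" for t
    proof (rule ccontr)
      assume "\<not> g2 \<le> (norm (sol eps t - ts))^2"
      then have "(norm (sol eps t - ts))^2 < g2" by simp
      then show False using nex that by blast
    qed
    have up: "Wf eps ts t2 - Wf eps ts t1 \<le> (- (lam * g2 / 2)) * (t2 - t1)"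
    proof (rule mvt_le[OF t12])
      show "continuous_on {t1..t2} (Wf eps ts)"
        using t1p by (intro continuous_on_subset[OF Wf_cont[OF eps(1)]]) auto
      fix x assume x: "t1 < x" "x < t2"
      show "(Wf eps ts has_real_derivative inner (sol eps x - ts) (r - M *v sol eps x)) (at x)"
        using Wf_deriv[OF eps(1)] x t1p by simp
      define z where "z = sol eps x - ts"
      have "r - M *v sol eps x = er - M *v z"
        by (simp add: z_def er_def matrix_vector_mult_diff_distrib)
      then have "inner (sol eps x - ts) (r - M *v sol eps x) = inner (sol eps x) er - inner ts er - inner z (M *v z)"
        by (simp add: z_def inner_diff_right inner_diff_left)
      also have "\<dots> \<le> tau - lam * g2"
      proof -
        have "inner (sol eps x) er \<le> tau" using bnd_e[of x] x by simp
        moreover have "lam * g2 \<le> inner z (M *v z)"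
        proof -
          have "g2 \<le> (norm z)^2" using far[of x] x by (simp add: z_def)
          then have "lam * g2 \<le> lam * (norm z)^2" using lam(1) by (intro mult_left_mono) auto
          also have "\<dots> \<le> inner z (M *v z)" by (rule lam(2))
          finally show ?thesis .
        qed
        ultimately show ?thesis using tsr by simp
      qed
      also have "\<dots> \<le> - (lam * g2 / 2)" using tau by (simp add: tau_def L_def er_def)
      finally show "inner (sol eps x - ts) (r - M *v sol eps x) \<le> - (lam * g2 / 2)" .
    qed
    have low: "- (real CARD('d) * Bn + (\<Sum>i\<in>UNIV. ts $ i * \<bar>ln (Bn / C $ i)\<bar>) + L * rho * (\<Sum>i\<in>UNIV. ts $ i))
        \<le> Wf eps ts t2 - Wf eps ts t1"
    proof -
      have "Wf eps ts t2 - Wf eps ts t1 = (\<Sum>i\<in>UNIV. (sol eps t2 $ i - sol eps t1 $ i) - ts $ i * (ln (sol eps t2 $ i) - ln (sol eps t1 $ i)))"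
        unfolding Wf_def[OF eps(1)] sum_subtractf[symmetric] by (intro sum.cong) (auto simp: algebra_simps)
      moreover have "(\<Sum>i\<in>UNIV. - (Bn + (ts $ i * \<bar>ln (Bn / C $ i)\<bar> + L * rho * ts $ i)))
          \<le> (\<Sum>i\<in>UNIV. (sol eps t2 $ i - sol eps t1 $ i) - ts $ i * (ln (sol eps t2 $ i) - ln (sol eps t1 $ i)))"
      proof (intro sum_mono)
        fix i
        have a: "sol eps t1 $ i \<le> Bn" using th_le_Bn[OF eps(1)] eps t1p by simp
        have b: "0 \<le> sol eps t2 $ i" using th_pos[OF eps(1)] t1p t12 by (simp add: less_imp_le)
        have c: "ts $ i * (ln (sol eps t2 $ i) - ln (sol eps t1 $ i)) \<le> ts $ i * \<bar>ln (Bn / C $ i)\<bar> + L * rho * ts $ i"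
        proof (cases "i \<in> A")
          case False then show ?thesis using ts by simp
        next
          case True
          have s0': "0 \<le> s" "0 \<le> s - dl" using s dl by auto
          have l2: "ln (sol eps t2 $ i) = ln (C $ i) + L * ww eps s $ i"
            using ln_th_scaled[OF eps s0'(1)] by (simp add: t2_def L_def)
          have l1: "ln (sol eps t1 $ i) = ln (C $ i) + L * ww eps (s - dl) $ i"
            using ln_th_scaled[OF eps s0'(2)] by (simp add: t1_def L_def)
          have "ww eps s $ i \<le> ln (Bn / C $ i) / L" using ww_upper[OF eps s0'(1)] by (simp add: L_def)
          then have u: "L * ww eps s $ i \<le> \<bar>ln (Bn / C $ i)\<bar>" using L0 by (simp add: field_simps)
          have "- rho < ww eps (s - dl) $ i" using wA True dl by simp
          then have "L * (- rho) \<le> L * ww eps (s - dl) $ i" using L0 by (intro mult_left_mono) auto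
          then have v: "- (L * rho) \<le> L * ww eps (s - dl) $ i" by simp
          have "ln (sol eps t2 $ i) - ln (sol eps t1 $ i) \<le> \<bar>ln (Bn / C $ i)\<bar> + L * rho"
            using l1 l2 u v by linarith
          then have "ts $ i * (ln (sol eps t2 $ i) - ln (sol eps t1 $ i)) \<le> ts $ i * (\<bar>ln (Bn / C $ i)\<bar> + L * rho)"
            using ts(1) by (intro mult_left_mono) auto
          then show ?thesis by (simp add: algebra_simps)
        qed
        show "- (Bn + (ts $ i * \<bar>ln (Bn / C $ i)\<bar> + L * rho * ts $ i))
            \<le> (sol eps t2 $ i - sol eps t1 $ i) - ts $ i * (ln (sol eps t2 $ i) - ln (sol eps t1 $ i))"
          using a b c by linarith
      qed
      moreover have "(\<Sum>i\<in>UNIV. - (Bn + (ts $ i * \<bar>ln (Bn / C $ i)\<bar> + L * rho * ts $ i)))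
          = - (real CARD('d) * Bn + (\<Sum>i\<in>UNIV. ts $ i * \<bar>ln (Bn / C $ i)\<bar>) + L * rho * (\<Sum>i\<in>UNIV. ts $ i))"
      proof -
        have "(\<Sum>i\<in>UNIV. - (Bn + (ts $ i * \<bar>ln (Bn / C $ i)\<bar> + L * rho * ts $ i)))
          = - ((\<Sum>i\<in>(UNIV::'d set). Bn) + ((\<Sum>i\<in>UNIV. ts $ i * \<bar>ln (Bn / C $ i)\<bar>) + (\<Sum>i\<in>UNIV. L * rho * ts $ i)))"
          by (simp only: sum_negf sum.distrib)
        moreover have "(\<Sum>i\<in>(UNIV::'d set). Bn) = real CARD('d) * Bn" by simp
        moreover have "(\<Sum>i\<in>UNIV. L * rho * ts $ i) = L * rho * (\<Sum>i\<in>UNIV. ts $ i)" by (simp add: sum_distrib_left)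
        ultimately show ?thesis by simp
      qed
      ultimately show ?thesis by simp
    qed
    have "t2 - t1 = dl * L" by (simp add: t1_def t2_def algebra_simps)
    then have "lam * g2 / 2 * (dl * L) \<le> real CARD('d) * Bn + (\<Sum>i\<in>UNIV. ts $ i * \<bar>ln (Bn / C $ i)\<bar>) + L * (rho * (\<Sum>i\<in>UNIV. ts $ i))"
      using up low by (simp add: algebra_simps)
    moreover have "L * (rho * (\<Sum>i\<in>UNIV. ts $ i)) \<le> L * (dl * lam * g2 / 4)"
      using rho(2) L0 by (intro mult_left_mono) auto
    ultimately have "lam * g2 * dl / 4 * L \<le> real CARD('d) * Bn + (\<Sum>i\<in>UNIV. ts $ i * \<bar>ln (Bn / C $ i)\<bar>)"
      by (simp add: algebra_simps)
    then show False using LK by (simp add: L_def)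
  qed
  then obtain t0 where t0: "t1 \<le> t0" "t0 \<le> t2" "(norm (sol eps t0 - ts))^2 < g2" by blast
  have fm: "fobj X y (sol eps t2) \<le> fobj X y (sol eps t0)"
    using fobj_mono[OF eps(1)] t0 t1p by simp
  have sh: "fobj X y v = fobj X y ts + 1/2 * inner (v - ts) (M *v (v - ts)) - inner er v" for v
    using fobj_shift[of ts v] tsr by (simp add: er_def)
  have "inner (sol eps t2 - ts) (M *v (sol eps t2 - ts)) \<le> inner (sol eps t0 - ts) (M *v (sol eps t0 - ts)) + 2 * inner er (sol eps t2) - 2 * inner er (sol eps t0)"
    using fm sh[of "sol eps t2"] sh[of "sol eps t0"] by simp
  also have "\<dots> \<le> Mn * g2 + 4 * tau"
  proof -
    have "inner (sol eps t0 - ts) (M *v (sol eps t0 - ts)) \<le> Mn * (norm (sol eps t0 - ts))^2" by (rule quad_le_Mn)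
    also have "\<dots> \<le> Mn * g2" using t0(3) Mn_nonneg by (intro mult_left_mono) auto
    finally have q: "inner (sol eps t0 - ts) (M *v (sol eps t0 - ts)) \<le> Mn * g2" .
    have "\<bar>inner er (sol eps t2)\<bar> \<le> tau" "\<bar>inner er (sol eps t0)\<bar> \<le> tau"
      using bnd_e[of t2] bnd_e[of t0] t12 t0 by (auto simp: inner_commute)
    then show ?thesis using q by linarith
  qed
  finally have "inner (sol eps t2 - ts) (M *v (sol eps t2 - ts)) \<le> Mn * g2 + 4 * tau" .
  moreover have "lam * (norm (sol eps t2 - ts))^2 \<le> inner (sol eps t2 - ts) (M *v (sol eps t2 - ts))" by (rule lam)
  ultimately show ?thesis by (simp add: t2_def L_def tau_def er_def)
qed


lemma local_unif:
  assumes d0: "0 < dl"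
    and R: "\<forall>s. s0 - 3*dl \<le> s \<and> s \<le> s0 + 2*dl \<longrightarrow> 0 < s \<and> supp_mu X y k s = A"
  shows "uniform_limit {s0-dl..s0+dl} (\<lambda>\<epsilon> s. sol \<epsilon> (s * ln (1/\<epsilon>)))
          (\<lambda>s. theta_star X y (supp_mu X y k s)) (at_right 0)"
proof -
  obtain ts c where W: "theta_star X y A = ts" "\<forall>i. 0 \<le> ts $ i" "\<forall>i. i \<notin> A \<longrightarrow> ts $ i = 0"
    "\<forall>i\<in>A. (r - M *v ts) $ i = 0" "0 < c"
    "\<forall>s j. s0 - 3*dl \<le> s \<longrightarrow> s \<le> s0 + dl \<longrightarrow> j \<notin> A \<longrightarrow> wPhi s $ j \<le> - c"
    "\<forall>s i. s0 - 3*dl \<le> s \<longrightarrow> s \<le> s0 + 2*dl \<longrightarrow> i \<in> A \<longrightarrow> wPhi s $ i = 0"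
    by (rule window_facts[OF d0 R])
  have s0p: "0 < s0 - 3*dl" using R[rule_format, of "s0 - 3*dl"] d0 by simp
  have supp_eq: "supp_mu X y k s = A" if "s0 - dl \<le> s" "s \<le> s0 + dl" for s
    using R[rule_format, of s] that d0 by simp
  show ?thesis
  proof (rule uniform_limitI)
    fix e0 :: real assume e0: "0 < e0"
    define g2 where "g2 = lam * e0^2 / (2 * (Mn + 1))"
    define Sts where "Sts = (\<Sum>i\<in>UNIV. ts $ i)"
    define rho where "rho = dl * lam * g2 / (4 * (Sts + 1))"
    define er where "er = r - M *v ts"
    define K1 where "K1 = (real CARD('d) * Bn + (\<Sum>i\<in>UNIV. ts $ i * \<bar>ln (Bn / C $ i)\<bar>)) / (lam * g2 * dl / 4)"
    define tauf where "tauf eps = (\<Sum>j\<in>UNIV. \<bar>er $ j\<bar> * C $ j * exp (- (ln (1/eps) * (c/2))))" for eps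
    have g2: "0 < g2" using lam(1) e0 Mn_nonneg by (simp add: g2_def)
    have Sts0: "0 \<le> Sts" using W(2) by (simp add: Sts_def sum_nonneg)
    have rho: "0 < rho" using d0 lam(1) g2 Sts0 by (simp add: rho_def)
    have rhoS: "rho * (\<Sum>i\<in>UNIV. ts $ i) \<le> dl * lam * g2 / 4"
    proof -
      have "rho * Sts = dl * lam * g2 / 4 * (Sts / (Sts + 1))" using Sts0 by (simp add: rho_def field_simps)
      also have "\<dots> \<le> dl * lam * g2 / 4 * 1" using Sts0 d0 lam(1) g2 by (intro mult_left_mono) auto
      finally show ?thesis by (simp add: Sts_def)
    qed
    have Mg: "Mn * g2 \<le> lam * e0^2 / 2"
    proof -
      have "Mn * g2 = lam * e0^2 / 2 * (Mn / (Mn + 1))" using Mn_nonneg by (simp add: g2_def field_simps)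
      also have "\<dots> \<le> lam * e0^2 / 2 * 1" using Mn_nonneg lam(1) by (intro mult_left_mono) auto
      finally show ?thesis by simp
    qed
    have D0: "0 < lam * g2 * dl / 4" using lam(1) g2 d0 by simp
    have E1: "eventually (\<lambda>eps. \<forall>s\<in>{0<..s0 + 2*dl}. \<forall>i. \<bar>ww eps s $ i - wPhi s $ i\<bar> < min rho (c/2)) (at_right 0)"
      by (rule ww_conv) (use s0p d0 rho W(5) in auto)
    have E3: "eventually (\<lambda>eps. tauf eps < min (lam * e0^2 / 8) (lam * g2 / 2)) (at_right 0)"
    proof -
      have "((\<lambda>eps. exp (- (ln (1/eps) * (c/2)))) \<longlongrightarrow> 0) (at_right 0)"
        by (rule exp_ln_lim) (use W(5) in simp)
      then have "(tauf \<longlongrightarrow> (\<Sum>j\<in>UNIV. \<bar>er $ j\<bar> * C $ j * 0)) (at_right 0)"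
        unfolding tauf_def by (intro tendsto_intros)
      then have "(tauf \<longlongrightarrow> 0) (at_right 0)" by simp
      moreover have "0 < min (lam * e0^2 / 8) (lam * g2 / 2)" using lam(1) e0 g2 by simp
      ultimately show ?thesis by (rule order_tendstoD)
    qed
    have E4: "eventually (\<lambda>eps. K1 < ln (1/eps)) (at_right 0)"
      using Lg_lim by (simp add: filterlim_at_top_dense)
    show "eventually (\<lambda>eps. \<forall>s\<in>{s0-dl..s0+dl}. dist (sol eps (s * ln (1/eps))) (theta_star X y (supp_mu X y k s)) < e0) (at_right 0)"
      using E1 E3 E4 ev_pos_right
    proof eventually_elim
      case (elim eps)
      then have eps: "0 < eps" "eps < 1" by auto
      have Lg: "Lg eps = ln (1/eps)" using Lg_def[OF eps(1)] .
      show ?case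
      proof
        fix s assume s: "s \<in> {s0-dl..s0+dl}"
        have ts_eq: "theta_star X y (supp_mu X y k s) = ts" using supp_eq s W(1) by simp
        have wA: "\<forall>\<sigma> i. s - dl \<le> \<sigma> \<longrightarrow> \<sigma> \<le> s \<longrightarrow> i \<in> A \<longrightarrow> - rho < ww eps \<sigma> $ i"
        proof (intro allI impI)
          fix \<sigma> i assume a: "s - dl \<le> \<sigma>" "\<sigma> \<le> s" "i \<in> A"
          have sg: "\<sigma> \<in> {0<..s0 + 2*dl}" using a s s0p d0 by auto
          have "wPhi \<sigma> $ i = 0" using W(7) a s d0 by auto
          moreover have "\<bar>ww eps \<sigma> $ i - wPhi \<sigma> $ i\<bar> < min rho (c/2)" using elim sg by blast
          ultimately show "- rho < ww eps \<sigma> $ i" by (auto simp: abs_less_iff)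
        qed
        have wN: "\<forall>\<sigma> j. s - dl \<le> \<sigma> \<longrightarrow> \<sigma> \<le> s \<longrightarrow> j \<notin> A \<longrightarrow> ww eps \<sigma> $ j < - c/2"
        proof (intro allI impI)
          fix \<sigma> j assume a: "s - dl \<le> \<sigma>" "\<sigma> \<le> s" "j \<notin> A"
          have sg: "\<sigma> \<in> {0<..s0 + 2*dl}" using a s s0p d0 by auto
          have "wPhi \<sigma> $ j \<le> - c" using W(6) a s d0 by auto
          moreover have "\<bar>ww eps \<sigma> $ j - wPhi \<sigma> $ j\<bar> < min rho (c/2)" using elim sg by blast
          then have "\<bar>ww eps \<sigma> $ j - wPhi \<sigma> $ j\<bar> < c/2" by (rule less_le_trans) (rule min.cobounded2)
          moreover have "ww eps \<sigma> $ j - wPhi \<sigma> $ j \<le> \<bar>ww eps \<sigma> $ j - wPhi \<sigma> $ j\<bar>" by (rule abs_ge_self)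
          ultimately show "ww eps \<sigma> $ j < - c/2" by linarith
        qed
        have sdl: "0 < s - dl" using s s0p d0 by simp
        have tl: "tauf eps < lam * g2 / 2" "tauf eps < lam * e0^2 / 8" using elim by auto
        have tau_le: "(\<Sum>j\<in>UNIV. \<bar>(r - M *v ts) $ j\<bar> * C $ j * exp (- (Lg eps * (c/2)))) \<le> lam * g2 / 2"
          using tl(1) by (simp add: tauf_def er_def Lg)
        have "(real CARD('d) * Bn + (\<Sum>i\<in>UNIV. ts $ i * \<bar>ln (Bn / C $ i)\<bar>)) / (lam * g2 * dl / 4) < Lg eps"
          using elim Lg by (simp add: K1_def)
        then have LK: "real CARD('d) * Bn + (\<Sum>i\<in>UNIV. ts $ i * \<bar>ln (Bn / C $ i)\<bar>) < lam * g2 * dl / 4 * Lg eps"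
          using D0 by (simp add: pos_divide_less_eq mult.commute)
        have core: "lam * (norm (sol eps (s * Lg eps) - ts))^2 \<le> Mn * g2 + 4 * (\<Sum>j\<in>UNIV. \<bar>(r - M *v ts) $ j\<bar> * C $ j * exp (- (Lg eps * (c/2))))"
          by (rule local_core[OF eps d0 sdl W(2) W(3) W(4) wA wN g2 rho rhoS tau_le LK])
        have "(\<Sum>j\<in>UNIV. \<bar>(r - M *v ts) $ j\<bar> * C $ j * exp (- (Lg eps * (c/2)))) = tauf eps"
          by (simp add: tauf_def er_def Lg)
        then have "lam * (norm (sol eps (s * Lg eps) - ts))^2 < lam * e0^2"
          using core Mg tl(2) by linarith
        then have "(norm (sol eps (s * Lg eps) - ts))^2 < e0^2" using lam(1) by simp
        then have "norm (sol eps (s * Lg eps) - ts) < e0" using e0 by (simp add: power_less_imp_less_base)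
        then show "dist (sol eps (s * ln (1/eps))) (theta_star X y (supp_mu X y k s)) < e0"
          by (simp add: ts_eq dist_norm Lg)
      qed
    qed
  qed
qed

lemma ball_sub_Icc: "ball (a::real) d \<subseteq> {a-d..a+d}"
  by (auto simp: dist_real_def)

lemma part2_unif: assumes "compact K" "K \<subseteq> {0<..} - jump_points X y k"
  shows "uniform_limit K (\<lambda>\<epsilon> s. sol \<epsilon> (s * ln (1/\<epsilon>)))
          (\<lambda>s. theta_star X y (supp_mu X y k s)) (at_right 0)"
proof -
  have loc: "\<forall>s0\<in>K. \<exists>dl. 0 < dl \<and> uniform_limit {s0-dl..s0+dl} (\<lambda>\<epsilon> s. sol \<epsilon> (s * ln (1/\<epsilon>)))
          (\<lambda>s. theta_star X y (supp_mu X y k s)) (at_right 0)"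
  proof
    fix s0 assume "s0 \<in> K"
    then have s0: "0 < s0" "s0 \<notin> jump_points X y k" using assms by auto
    then obtain d0 where d0: "0 < d0" "\<forall>s'. 0 < s' \<and> \<bar>s' - s0\<bar> < d0 \<longrightarrow> supp_mu X y k s' = supp_mu X y k s0"
      unfolding jump_points_def by auto
    define dl where "dl = min d0 s0 / 4"
    have dl: "0 < dl" using d0 s0 by (simp add: dl_def)
    have R: "\<forall>s. s0 - 3*dl \<le> s \<and> s \<le> s0 + 2*dl \<longrightarrow> 0 < s \<and> supp_mu X y k s = supp_mu X y k s0"
    proof (intro allI impI)
      fix s assume a: "s0 - 3*dl \<le> s \<and> s \<le> s0 + 2*dl"
      have "dl \<le> s0/4" "dl \<le> d0/4" by (auto simp: dl_def)
      then have "0 < s" "\<bar>s - s0\<bar> < d0" using a s0 d0 dl by auto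
      then show "0 < s \<and> supp_mu X y k s = supp_mu X y k s0" using d0 by auto
    qed
    show "\<exists>dl. 0 < dl \<and> uniform_limit {s0-dl..s0+dl} (\<lambda>\<epsilon> s. sol \<epsilon> (s * ln (1/\<epsilon>)))
          (\<lambda>s. theta_star X y (supp_mu X y k s)) (at_right 0)"
      using local_unif[OF dl R] dl by blast
  qed
  then obtain dlf where dlf: "\<forall>s0\<in>K. 0 < dlf s0 \<and> uniform_limit {s0 - dlf s0..s0 + dlf s0} (\<lambda>\<epsilon> s. sol \<epsilon> (s * ln (1/\<epsilon>)))
          (\<lambda>s. theta_star X y (supp_mu X y k s)) (at_right 0)"
    using bchoice[OF loc] by blast
  have cover: "K \<subseteq> (\<Union>s0\<in>K. ball s0 (dlf s0))" using dlf by force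
  obtain D where D: "D \<subseteq> K" "finite D" "K \<subseteq> (\<Union>s0\<in>D. ball s0 (dlf s0))"
    by (rule compactE_image[OF assms(1) _ cover]) auto
  have "uniform_limit (\<Union>s0\<in>D. {s0 - dlf s0..s0 + dlf s0}) (\<lambda>\<epsilon> s. sol \<epsilon> (s * ln (1/\<epsilon>)))
          (\<lambda>s. theta_star X y (supp_mu X y k s)) (at_right 0)"
    by (rule uniform_limit_on_UNION[OF D(2)]) (use dlf D(1) in blast)
  moreover have "K \<subseteq> (\<Union>s0\<in>D. {s0 - dlf s0..s0 + dlf s0})"
    using D(3) ball_sub_Icc by blast
  ultimately show ?thesis by (rule uniform_limit_on_subset)
qed

end

theorem theorem1:
  fixes X :: "real^'d^'n" and y :: "real^'n" and C k :: "real^'d"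
    and sol :: "real \<Rightarrow> real \<Rightarrow> real^'d"
  assumes r_pos: "\<forall>i. corr X y $ i > 0"
    and offdiag: "\<forall>i j. i \<noteq> j \<longrightarrow> gram X $ i $ j \<le> 0"
    and C_pos: "\<forall>i. C $ i > 0"
    and k_pos: "\<forall>i. k $ i > 0"
    and sol_init: "\<forall>\<epsilon>>0. sol \<epsilon> 0 = (\<chi> i. C $ i * \<epsilon> powr (k $ i))"
    and sol_ode: "\<forall>\<epsilon>>0. \<forall>t\<ge>0.
       (sol \<epsilon> has_vector_derivative dln_field X y (sol \<epsilon> t)) (at t within {0..})"
  shows
    "(\<forall>s s'. 0 < s \<longrightarrow> s \<le> s' \<longrightarrow> (\<forall>i. mu X y k s $ i \<le> mu X y k s' $ i))
   \<and> (\<forall>s s'. 0 < s \<longrightarrow> s \<le> s' \<longrightarrow> supp_mu X y k s \<subseteq> supp_mu X y k s')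
   \<and> finite (jump_points X y k)
   \<and> (\<forall>s>0. s \<notin> jump_points X y k \<longrightarrow>
        ((\<lambda>\<epsilon>. sol \<epsilon> (s * ln (1/\<epsilon>))) \<longlongrightarrow> theta_star X y (supp_mu X y k s)) (at_right 0))
   \<and> (\<forall>K. compact K \<longrightarrow> K \<subseteq> {0<..} - jump_points X y k \<longrightarrow>
        uniform_limit K (\<lambda>\<epsilon> s. sol \<epsilon> (s * ln (1/\<epsilon>)))
          (\<lambda>s. theta_star X y (supp_mu X y k s)) (at_right 0))
   \<and> (\<forall>s>0. ((\<lambda>\<epsilon>. (1 / (s * ln (1/\<epsilon>))) *\<^sub>R integral {0..s * ln (1/\<epsilon>)} (sol \<epsilon>))
        \<longlongrightarrow> mu X y k s) (at_right 0))
   \<and> (\<forall>K. compact K \<longrightarrow> K \<subseteq> {0<..} \<longrightarrow>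
        uniform_limit K (\<lambda>\<epsilon> s. (1 / (s * ln (1/\<epsilon>))) *\<^sub>R integral {0..s * ln (1/\<epsilon>)} (sol \<epsilon>))
          (mu X y k) (at_right 0))"
proof -
  interpret dln X y C k sol
    using r_pos offdiag C_pos k_pos sol_init sol_ode by (simp add: dln_def)
  have p1: "\<forall>s s'. 0 < s \<longrightarrow> s \<le> s' \<longrightarrow> (\<forall>i. mu X y k s $ i \<le> mu X y k s' $ i)"
    using mu_mono by blast
  have p2: "\<forall>s s'. 0 < s \<longrightarrow> s \<le> s' \<longrightarrow> supp_mu X y k s \<subseteq> supp_mu X y k s'"
    using supp_mono by blast
  have p5: "\<forall>K. compact K \<longrightarrow> K \<subseteq> {0<..} - jump_points X y k \<longrightarrow>
        uniform_limit K (\<lambda>\<epsilon> s. sol \<epsilon> (s * ln (1/\<epsilon>)))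
          (\<lambda>s. theta_star X y (supp_mu X y k s)) (at_right 0)"
    using part2_unif by blast
  have p4: "\<forall>s>0. s \<notin> jump_points X y k \<longrightarrow>
        ((\<lambda>\<epsilon>. sol \<epsilon> (s * ln (1/\<epsilon>))) \<longlongrightarrow> theta_star X y (supp_mu X y k s)) (at_right 0)"
  proof (intro allI impI)
    fix s :: real assume "0 < s" "s \<notin> jump_points X y k"
    then have "uniform_limit {s} (\<lambda>\<epsilon> s. sol \<epsilon> (s * ln (1/\<epsilon>)))
          (\<lambda>s. theta_star X y (supp_mu X y k s)) (at_right 0)"
      using part2_unif[of "{s}"] by simp
    then show "((\<lambda>\<epsilon>. sol \<epsilon> (s * ln (1/\<epsilon>))) \<longlongrightarrow> theta_star X y (supp_mu X y k s)) (at_right 0)"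
      by (rule tendsto_uniform_limitI) simp
  qed
  have p7: "\<forall>K. compact K \<longrightarrow> K \<subseteq> {0<..} \<longrightarrow>
        uniform_limit K (\<lambda>\<epsilon> s. (1 / (s * ln (1/\<epsilon>))) *\<^sub>R integral {0..s * ln (1/\<epsilon>)} (sol \<epsilon>))
          (mu X y k) (at_right 0)"
    using part3_unif by blast
  have p6: "\<forall>s>0. ((\<lambda>\<epsilon>. (1 / (s * ln (1/\<epsilon>))) *\<^sub>R integral {0..s * ln (1/\<epsilon>)} (sol \<epsilon>))
        \<longlongrightarrow> mu X y k s) (at_right 0)"
  proof (intro allI impI)
    fix s :: real assume "0 < s"
    then have "uniform_limit {s} (\<lambda>\<epsilon> s. (1 / (s * ln (1/\<epsilon>))) *\<^sub>R integral {0..s * ln (1/\<epsilon>)} (sol \<epsilon>))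
          (mu X y k) (at_right 0)"
      using part3_unif[of "{s}"] by simp
    then show "((\<lambda>\<epsilon>. (1 / (s * ln (1/\<epsilon>))) *\<^sub>R integral {0..s * ln (1/\<epsilon>)} (sol \<epsilon>))
        \<longlongrightarrow> mu X y k s) (at_right 0)"
      by (rule tendsto_uniform_limitI) simp
  qed
  show ?thesis using p1 p2 finite_jumps p4 p5 p6 p7 by blast
qed

end
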